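(* Let $|\phi_j\rangle=HX^j|0\rangle$, where $H=\frac{1}{\sqrt d}\sum_{m,n=0}^{d-1}\omega^{mn}|m\rangle\langle n|$ with $\omega=e^{i2\pi/d}$ is the $d$-dimensional Hadamard (Fourier) gate and $X=\sum_{m=0}^{d-1}|m+1\rangle\langle m|$ is the generalized Pauli $X$ gate. For $\Omega=\{(1/k,|\phi_j\rangle)\}_{j=0}^{k-1}$ with $k\le d$, \[ \mathbf{C}_{\mathrm{MIO}}(\Omega)+\mathbf{S}(\Omega)=\log_2 d . \]
   Context: Incoherent states $\mathcal{I}$ are diagonal in the computational basis; MIO are channels mapping $\mathcal{I}$ into itself. Robustness of coherence $C_R(\rho)=\min\{s\ge0:(\rho+s\tau)/(1+s)\in\mathcal{I}\text{ for some state }\tau\}$. Post-discrimination coherence $\mathbf{C}_{\mathrm{MIO}}(\Omega)=\log_2(1+\eta)$, $\eta=\max\sum_j p_jC_R(\sigma_j)$ over MIO channels $\mathcal{N}_{A\to BA'}$ ($\dim B=k$, $A'\cong A$) with $\sigma_j=\mathrm{tr}_B[\mathcal{N}(\rho_j)]$ and $\sum_j p_j\mathrm{tr}[\mathcal{N}(\rho_j)(|j\rangle\langle j|_B\otimes I_{A'})]=P_{\mathrm{suc}}(\Omega)$ (optimal POVM discrimination probability). $\mathbf{S}(\Omega)$ is the von Neumann entropy of the average state $\sum_jp_j|\phi_j\rangle\langle\phi_j|$ (here $\log_2 k$). *)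

theory Defs
  imports "Jordan_Normal_Form.Matrix" "Jordan_Normal_Form.Char_Poly"
    "Jordan_Normal_Form.Schur_Decomposition"
    "HOL-Computational_Algebra.Polynomial"
begin

definition mtrace :: "complex mat \<Rightarrow> complex" where
  "mtrace A = (\<Sum>i<dim_row A. A $$ (i,i))"

fun matsum :: "nat \<Rightarrow> (nat \<Rightarrow> complex mat) \<Rightarrow> nat \<Rightarrow> complex mat" where
  "matsum n f 0 = 0\<^sub>m n n"
| "matsum n f (Suc m) = matsum n f m + f m"

definition psd :: "nat \<Rightarrow> complex mat \<Rightarrow> bool" where
  "psd n A \<longleftrightarrow> A \<in> carrier_mat n n \<and>
     (\<forall>v \<in> carrier_vec n. \<exists>r::real. r \<ge> 0 \<and> conjugate v \<bullet> (A *\<^sub>v v) = complex_of_real r)"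

definition density :: "nat \<Rightarrow> complex mat \<Rightarrow> bool" where
  "density n \<rho> \<longleftrightarrow> psd n \<rho> \<and> mtrace \<rho> = 1"

definition incoherent :: "nat \<Rightarrow> complex mat \<Rightarrow> bool" where
  "incoherent n \<rho> \<longleftrightarrow> density n \<rho> \<and> diagonal_mat \<rho>"

definition ket_bra :: "complex vec \<Rightarrow> complex mat" where
  "ket_bra v = mat (dim_vec v) (dim_vec v) (\<lambda>(i,j). v $ i * cnj (v $ j))"

definition is_channel :: "nat \<Rightarrow> nat \<Rightarrow> complex mat list \<Rightarrow> bool" where
  "is_channel din dout Ks \<longleftrightarrow> (\<forall>K \<in> set Ks. K \<in> carrier_mat dout din) \<and>
     foldr (\<lambda>K acc. mat_adjoint K * K + acc) Ks (0\<^sub>m din din) = 1\<^sub>m din"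

definition apply_channel :: "nat \<Rightarrow> complex mat list \<Rightarrow> complex mat \<Rightarrow> complex mat" where
  "apply_channel dout Ks \<rho> = foldr (\<lambda>K acc. K * \<rho> * mat_adjoint K + acc) Ks (0\<^sub>m dout dout)"

definition is_MIO :: "nat \<Rightarrow> nat \<Rightarrow> complex mat list \<Rightarrow> bool" where
  "is_MIO din dout Ks \<longleftrightarrow> is_channel din dout Ks \<and>
     (\<forall>\<rho>. incoherent din \<rho> \<longrightarrow> incoherent dout (apply_channel dout Ks \<rho>))"

definition robustness :: "nat \<Rightarrow> complex mat \<Rightarrow> real" where
  "robustness n \<rho> = Inf {s::real. s \<ge> 0 \<and> (\<exists>\<tau>. density n \<tau> \<and>
       incoherent n (complex_of_real (1/(1+s)) \<cdot>\<^sub>m (\<rho> + complex_of_real s \<cdot>\<^sub>m \<tau>)))}"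

text \<open>Basis vector |b>_B |a>_A' has index b*d + a.\<close>
definition ptrace_B :: "nat \<Rightarrow> nat \<Rightarrow> complex mat \<Rightarrow> complex mat" where
  "ptrace_B k d M = mat d d (\<lambda>(a1,a2). \<Sum>b<k. M $$ (b*d + a1, b*d + a2))"

text \<open>tr[M (|j><j|_B tensor I_A')]\<close>
definition proj_B_trace :: "nat \<Rightarrow> nat \<Rightarrow> complex mat \<Rightarrow> complex" where
  "proj_B_trace d j M = (\<Sum>a<d. M $$ (j*d + a, j*d + a))"

definition is_POVM :: "nat \<Rightarrow> nat \<Rightarrow> (nat \<Rightarrow> complex mat) \<Rightarrow> bool" where
  "is_POVM d k E \<longleftrightarrow> (\<forall>j<k. psd d (E j)) \<and> matsum d E k = 1\<^sub>m d"

definition P_suc :: "nat \<Rightarrow> nat \<Rightarrow> (nat \<Rightarrow> real) \<Rightarrow> (nat \<Rightarrow> complex mat) \<Rightarrow> real" where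
  "P_suc d k p \<rho> = Sup {(\<Sum>j<k. p j * Re (mtrace (E j * \<rho> j))) | E. is_POVM d k E}"

definition C_MIO :: "nat \<Rightarrow> nat \<Rightarrow> (nat \<Rightarrow> real) \<Rightarrow> (nat \<Rightarrow> complex mat) \<Rightarrow> real" where
  "C_MIO d k p \<rho> = log 2 (1 + Sup {(\<Sum>j<k. p j * robustness d (ptrace_B k d (apply_channel (k*d) Ks (\<rho> j))))
       | Ks. is_MIO d (k*d) Ks \<and>
             (\<Sum>j<k. p j * Re (proj_B_trace d j (apply_channel (k*d) Ks (\<rho> j)))) = P_suc d k p \<rho>})"

text \<open>Eigenvalues counted with algebraic multiplicity as roots of the characteristic polynomial;
  convention 0 log 0 = 0 (automatic since log 2 0 = 0).\<close>
definition vn_entropy :: "complex mat \<Rightarrow> real" where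
  "vn_entropy A = - (\<Sum>z \<in> {z. poly (char_poly A) z = 0}.
        real (order z (char_poly A)) * (Re z * log 2 (Re z)))"

definition omega :: "nat \<Rightarrow> complex" where
  "omega d = cis (2 * pi / real d)"

definition hadamard :: "nat \<Rightarrow> complex mat" where
  "hadamard d = mat d d (\<lambda>(m,n). omega d ^ (m*n) / complex_of_real (sqrt (real d)))"

definition pauliX :: "nat \<Rightarrow> complex mat" where
  "pauliX d = mat d d (\<lambda>(m,n). if m = (n + 1) mod d then 1 else 0)"

definition phi :: "nat \<Rightarrow> nat \<Rightarrow> complex vec" where
  "phi d j = (hadamard d * (pauliX d ^\<^sub>m j)) *\<^sub>v unit_vec d 0"

end

theory Submission
  imports Defs
begin


lemma omega_pow: "omega d ^ n = cis (2 * pi * real n / real d)"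
  unfolding omega_def DeMoivre by (simp add: field_simps)

lemma root_sum:
  assumes "a < d" "b < d"
  shows "(\<Sum>i<d. omega d ^ (a*i) * cnj (omega d ^ (b*i))) = (if a = b then of_nat d else 0)"
proof (cases "a = b")
  case True
  have "omega d ^ (a*i) * cnj (omega d ^ (a*i)) = 1" for i
    unfolding omega_pow cis_cnj by (simp add: cis_mult)
  then show ?thesis using True by simp
next
  case False
  define z where "z = cis (2 * pi * (real a - real b) / real d)"
  have d0: "d > 0" using assms by simp
  have t: "omega d ^ (a*i) * cnj (omega d ^ (b*i)) = z ^ i" for i
    unfolding omega_pow cis_cnj cis_mult z_def DeMoivre
    by (rule arg_cong[where f=cis], insert d0, simp add: field_simps)
  have zd: "z ^ d = 1" unfolding z_def DeMoivre
  proof -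
    have "real d * (2 * pi * (real a - real b) / real d) = 2 * pi * real_of_int (int a - int b)"
      using d0 by (simp add: field_simps)
    then show "cis (real d * (2 * pi * (real a - real b) / real d)) = 1"
      by (simp only:) (rule cis_multiple_2pi, simp)
  qed
  have z1: "z \<noteq> 1"
  proof
    assume "z = 1"
    then have "cos (2 * pi * (real a - real b) / real d) = 1" unfolding z_def
      by (metis cis.sel(1) one_complex.sel(1))
    then obtain n :: int where n: "2 * pi * (real a - real b) / real d = real_of_int n * 2 * pi"
      using cos_one_2pi_int by blast
    then have "2*pi*(real a - real b) = 2*pi*(real_of_int n * real d)" using d0 by (simp add: field_simps)
    then have "real a - real b = real_of_int n * real d" using pi_gt_zero by simp
    then have e: "int a - int b = n * int d" by (metis of_int_eq_iff of_int_diff of_int_mult of_int_of_nat_eq)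
    show False
    proof (cases "n = 0")
      case True with e False show False by simp
    next
      case nz: False
      have "\<bar>n * int d\<bar> \<ge> int d" using nz d0 by (simp add: abs_mult mult_le_cancel_right1)
      with e assms show False by linarith
    qed
  qed
  have "(\<Sum>i<d. omega d ^ (a*i) * cnj (omega d ^ (b*i))) = (\<Sum>i<d. z ^ i)"
    by (simp only: t)
  also have "\<dots> = 0" by (simp add: geometric_sum[OF z1] zd)
  finally show ?thesis using False by simp
qed

definition u :: "nat \<Rightarrow> nat \<Rightarrow> nat \<Rightarrow> complex" where
  "u d m a = omega d ^ (a*m) / complex_of_real (sqrt (real d))"

lemma sqrt_sq_c: "complex_of_real (sqrt (real d)) * cnj (complex_of_real (sqrt (real d))) = of_nat d"
proof -
  have "sqrt (real d) * sqrt (real d) = real d" by simp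
  then show ?thesis by (metis complex_cnj_complex_of_real of_real_mult of_real_of_nat_eq)
qed

lemma u_compl:
  assumes "a < d" "b < d"
  shows "(\<Sum>m<d. u d m a * cnj (u d m b)) = (if a = b then 1 else 0)"
proof -
  have "(\<Sum>m<d. u d m a * cnj (u d m b)) =
     (\<Sum>m<d. omega d ^ (a*m) * cnj (omega d ^ (b*m))) / (complex_of_real (sqrt (real d)) * cnj (complex_of_real (sqrt (real d))))"
    unfolding u_def by (simp add: sum_divide_distrib)
  also have "\<dots> = (if a = b then 1 else 0)" unfolding root_sum[OF assms] sqrt_sq_c using assms by auto
  finally show ?thesis .
qed

lemma u_orth:
  assumes "i < d" "j < d"
  shows "(\<Sum>a<d. u d i a * cnj (u d j a)) = (if i = j then 1 else 0)"
proof -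
  have "(\<Sum>a<d. u d i a * cnj (u d j a)) =
     (\<Sum>a<d. omega d ^ (i*a) * cnj (omega d ^ (j*a))) / (complex_of_real (sqrt (real d)) * cnj (complex_of_real (sqrt (real d))))"
    unfolding u_def by (simp add: sum_divide_distrib mult.commute)
  also have "\<dots> = (if i = j then 1 else 0)" unfolding root_sum[OF assms] sqrt_sq_c using assms by auto
  finally show ?thesis .
qed

lemma u_norm: "d > 0 \<Longrightarrow> u d m a * cnj (u d m a) = 1 / of_nat d"
proof -
  assume d: "d > 0"
  have "omega d ^ (a*m) * cnj (omega d ^ (a*m)) = 1"
    unfolding omega_pow cis_cnj by (simp add: cis_mult)
  then show ?thesis unfolding u_def using sqrt_sq_c[of d] by (simp add: field_simps)
qed

lemma u0: "d > 0 \<Longrightarrow> u d 0 a = 1 / complex_of_real (sqrt (real d))"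
  unfolding u_def by simp



lemma mult_entry:
  assumes "A \<in> carrier_mat n m" "B \<in> carrier_mat m p" "i < n" "j < p"
  shows "(A * B) $$ (i,j) = (\<Sum>l<m. A $$ (i,l) * B $$ (l,j))"
  using assms by (auto simp: scalar_prod_def lessThan_atLeast0 intro!: sum.cong)

lemma mult_vec_entry:
  assumes "A \<in> carrier_mat n m" "dim_vec v = m" "i < n"
  shows "(A *\<^sub>v v) $ i = (\<Sum>l<m. A $$ (i,l) * v $ l)"
  using assms by (auto simp: scalar_prod_def lessThan_atLeast0 intro!: sum.cong)

lemma sum_delta_mult: fixes f :: "'b \<Rightarrow> complex" shows "finite S \<Longrightarrow> (\<Sum>e\<in>S. (if e = x then 1 else 0) * f e) = (if x \<in> S then f x else 0)"
proof -
  have "(\<lambda>e. (if e = x then 1 else 0) * f e) = (\<lambda>e. if e = x then f x else 0)" by auto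
  note eq = this
  show "finite S \<Longrightarrow> ?thesis" unfolding eq by simp
qed
lemma sum_delta_mult': fixes f :: "'b \<Rightarrow> complex" shows "finite S \<Longrightarrow> (\<Sum>e\<in>S. f e * (if e = x then 1 else 0)) = (if x \<in> S then f x else 0)"
proof -
  have "(\<lambda>e. f e * (if e = x then 1 else 0)) = (\<lambda>e. if e = x then f x else 0)" by auto
  note eq = this
  show "finite S \<Longrightarrow> ?thesis" unfolding eq by simp
qed

lemma pauliX_pow:
  "pauliX d ^\<^sub>m j \<in> carrier_mat d d \<and>
   (\<forall>b<d. \<forall>c<d. (pauliX d ^\<^sub>m j) $$ (b,c) = (if b = (c + j) mod d then 1 else 0))"
proof (induction j)
  case 0
  then show ?case by (auto simp: pauliX_def)
next
  case (Suc j)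
  have X: "pauliX d \<in> carrier_mat d d" by (simp add: pauliX_def)
  have "(pauliX d ^\<^sub>m Suc j) $$ (b,c) = (if b = (c + Suc j) mod d then 1 else 0)" if "b < d" "c < d" for b c
  proof -
    have "(pauliX d ^\<^sub>m Suc j) $$ (b,c) = (\<Sum>e<d. (pauliX d ^\<^sub>m j) $$ (b,e) * pauliX d $$ (e,c))"
      using Suc.IH X that by (simp add: scalar_prod_def lessThan_atLeast0)
    also have "\<dots> = (\<Sum>e<d. (if b = (e + j) mod d then 1 else 0) * (if e = (c+1) mod d then 1 else 0))"
      using Suc.IH that by (intro sum.cong) (auto simp: pauliX_def)
    also have "\<dots> = (\<Sum>e<d. (if e = (c+1) mod d then 1 else 0) * (if b = (e + j) mod d then 1 else 0))"
      by (simp add: mult.commute)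
    also have "\<dots> = (if b = ((c+1) mod d + j) mod d then 1 else 0)"
      using that by (subst sum_delta_mult) auto
    also have "((c+1) mod d + j) mod d = (c + Suc j) mod d" by (simp add: mod_add_left_eq)
    finally show ?thesis .
  qed
  then show ?case using Suc.IH X by auto
qed

lemma phi_dim: "dim_vec (phi d j) = d"
  by (simp add: phi_def hadamard_def)

lemma phi_index:
  assumes "a < d" "j < d"
  shows "phi d j $ a = u d j a"
proof -
  have P: "pauliX d ^\<^sub>m j \<in> carrier_mat d d" using pauliX_pow by blast
  have H: "hadamard d \<in> carrier_mat d d" by (simp add: hadamard_def)
  have "phi d j $ a = (\<Sum>c<d. (hadamard d * (pauliX d ^\<^sub>m j)) $$ (a,c) * unit_vec d 0 $ c)"
    unfolding phi_def using assms P H by (subst mult_vec_entry) auto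
  also have "\<dots> = (\<Sum>c<d. (hadamard d * (pauliX d ^\<^sub>m j)) $$ (a,c) * (if c = 0 then 1 else 0))"
    by (intro sum.cong) auto
  also have "\<dots> = (hadamard d * (pauliX d ^\<^sub>m j)) $$ (a,0)"
    using assms by (subst sum_delta_mult') auto
  also have "\<dots> = (\<Sum>b<d. hadamard d $$ (a,b) * (pauliX d ^\<^sub>m j) $$ (b,0))"
    using assms P H by (subst mult_entry) auto
  also have "\<dots> = (\<Sum>b<d. hadamard d $$ (a,b) * (if b = j then 1 else 0))"
    using assms pauliX_pow by (intro sum.cong) auto
  also have "\<dots> = u d j a" using assms
    by (subst sum_delta_mult') (auto simp: hadamard_def u_def mult.commute)
  finally show ?thesis .
qed

lemma ket_bra_phi:
  assumes "j < d"
  shows "ket_bra (phi d j) = mat d d (\<lambda>(a,b). u d j a * cnj (u d j b))"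
  unfolding ket_bra_def phi_dim by (rule eq_matI) (auto simp: phi_index assms)



definition Q :: "nat \<Rightarrow> complex mat \<Rightarrow> (nat \<Rightarrow> complex) \<Rightarrow> complex" where
  "Q n A v = (\<Sum>a<n. \<Sum>b<n. cnj (v a) * A $$ (a,b) * v b)"

definition nn :: "complex \<Rightarrow> bool" where
  "nn z \<longleftrightarrow> Im z = 0 \<and> Re z \<ge> 0"

lemma nn_iff: "(\<exists>r::real. r \<ge> 0 \<and> z = complex_of_real r) \<longleftrightarrow> nn z"
proof
  assume "\<exists>r::real. r \<ge> 0 \<and> z = complex_of_real r"
  then show "nn z" unfolding nn_def by auto
next
  assume "nn z"
  then have "z = complex_of_real (Re z)" unfolding nn_def by (simp add: complex_eq_iff)
  then show "\<exists>r::real. r \<ge> 0 \<and> z = complex_of_real r" using \<open>nn z\<close> unfolding nn_def by blast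
qed

lemma quad_form:
  assumes "A \<in> carrier_mat n n" "v \<in> carrier_vec n"
  shows "conjugate v \<bullet> (A *\<^sub>v v) = Q n A (\<lambda>i. v $ i)"
  using assms unfolding Q_def
  by (auto simp: scalar_prod_def lessThan_atLeast0 sum_distrib_left mult.assoc intro!: sum.cong)

lemma psd_iff: "psd n A \<longleftrightarrow> A \<in> carrier_mat n n \<and> (\<forall>v. nn (Q n A v))"
proof
  assume p: "psd n A"
  then have A: "A \<in> carrier_mat n n" unfolding psd_def by auto
  have "nn (Q n A v)" for v
  proof -
    have "vec n v \<in> carrier_vec n" by simp
    then have "nn (conjugate (vec n v) \<bullet> (A *\<^sub>v vec n v))" using p unfolding psd_def nn_iff by blast
    moreover have "Q n A (\<lambda>i. vec n v $ i) = Q n A v" unfolding Q_def by (intro sum.cong) auto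
    ultimately show ?thesis using quad_form[OF A] by simp
  qed
  then show "A \<in> carrier_mat n n \<and> (\<forall>v. nn (Q n A v))" using A by auto
next
  assume "A \<in> carrier_mat n n \<and> (\<forall>v. nn (Q n A v))"
  then show "psd n A" unfolding psd_def nn_iff using quad_form by auto
qed

lemma nn_sum: "(\<And>i. i \<in> S \<Longrightarrow> nn (f i)) \<Longrightarrow> nn (sum f S)"
  unfolding nn_def by (simp add: Im_sum Re_sum sum_nonneg)

lemma nn_add: "nn a \<Longrightarrow> nn b \<Longrightarrow> nn (a + b)" unfolding nn_def by simp

lemma adjoint_carrier: "K \<in> carrier_mat m d \<Longrightarrow> mat_adjoint K \<in> carrier_mat d m"
  unfolding mat_adjoint_def by (simp add: mat_of_rows_def)

lemma adjoint_entry: "K \<in> carrier_mat m d \<Longrightarrow> i < d \<Longrightarrow> j < m \<Longrightarrow> mat_adjoint K $$ (i,j) = cnj (K $$ (j,i))"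
  unfolding mat_adjoint_def by (simp add: mat_of_rows_index)

lemma apply_channel_entry:
  assumes "\<forall>K\<in>set Ks. K \<in> carrier_mat m d" "\<rho> \<in> carrier_mat d d"
  shows "apply_channel m Ks \<rho> \<in> carrier_mat m m \<and>
    (\<forall>x<m. \<forall>y<m. apply_channel m Ks \<rho> $$ (x,y) =
       sum_list (map (\<lambda>K. \<Sum>a<d. \<Sum>b<d. K $$ (x,a) * \<rho> $$ (a,b) * cnj (K $$ (y,b))) Ks))"
  using assms(1)
proof (induction Ks)
  case Nil
  then show ?case by (simp add: apply_channel_def)
next
  case (Cons K Ks)
  have K: "K \<in> carrier_mat m d" using Cons.prems by simp
  have IH: "apply_channel m Ks \<rho> \<in> carrier_mat m m"
    "\<And>x y. x < m \<Longrightarrow> y < m \<Longrightarrow> apply_channel m Ks \<rho> $$ (x,y) =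
       sum_list (map (\<lambda>K. \<Sum>a<d. \<Sum>b<d. K $$ (x,a) * \<rho> $$ (a,b) * cnj (K $$ (y,b))) Ks)"
    using Cons by auto
  have eq: "apply_channel m (K # Ks) \<rho> = K * \<rho> * mat_adjoint K + apply_channel m Ks \<rho>"
    unfolding apply_channel_def by simp
  have KA: "K * \<rho> * mat_adjoint K \<in> carrier_mat m m" using K assms(2) adjoint_carrier[OF K] by auto
  have ent: "(K * \<rho> * mat_adjoint K) $$ (x,y) = (\<Sum>a<d. \<Sum>b<d. K $$ (x,a) * \<rho> $$ (a,b) * cnj (K $$ (y,b)))"
    if "x < m" "y < m" for x y
  proof -
    have "(K * \<rho> * mat_adjoint K) $$ (x,y) = (\<Sum>b<d. (K * \<rho>) $$ (x,b) * mat_adjoint K $$ (b,y))"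
      using K assms(2) adjoint_carrier[OF K] that by (subst mult_entry) auto
    also have "\<dots> = (\<Sum>b<d. (\<Sum>a<d. K $$ (x,a) * \<rho> $$ (a,b)) * cnj (K $$ (y,b)))"
    proof (intro sum.cong refl)
      fix b assume "b \<in> {..<d}"
      then have b: "b < d" by simp
      show "(K * \<rho>) $$ (x, b) * mat_adjoint K $$ (b, y) = (\<Sum>a<d. K $$ (x, a) * \<rho> $$ (a, b)) * cnj (K $$ (y, b))"
        by (simp only: mult_entry[OF K assms(2) that(1) b] adjoint_entry[OF K b that(2)])
    qed
    also have "\<dots> = (\<Sum>b<d. \<Sum>a<d. K $$ (x,a) * \<rho> $$ (a,b) * cnj (K $$ (y,b)))"
      by (simp add: sum_distrib_right)
    also have "\<dots> = (\<Sum>a<d. \<Sum>b<d. K $$ (x,a) * \<rho> $$ (a,b) * cnj (K $$ (y,b)))"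
      by (rule sum.swap)
    finally show ?thesis .
  qed
  show ?case
  proof (intro conjI allI impI)
    show "apply_channel m (K # Ks) \<rho> \<in> carrier_mat m m" unfolding eq using KA IH by simp
    fix x y assume xy: "x < m" "y < m"
    show "apply_channel m (K # Ks) \<rho> $$ (x,y) =
       sum_list (map (\<lambda>K. \<Sum>a<d. \<Sum>b<d. K $$ (x,a) * \<rho> $$ (a,b) * cnj (K $$ (y,b))) (K # Ks))"
      unfolding eq using KA IH xy by (simp add: ent)
  qed
qed

lemma channel_TP_entry:
  assumes "\<forall>K\<in>set Ks. K \<in> carrier_mat m d"
  shows "foldr (\<lambda>K acc. mat_adjoint K * K + acc) Ks (0\<^sub>m d d) \<in> carrier_mat d d \<and>
    (\<forall>a<d. \<forall>b<d. foldr (\<lambda>K acc. mat_adjoint K * K + acc) Ks (0\<^sub>m d d) $$ (a,b) =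
       sum_list (map (\<lambda>K. \<Sum>x<m. cnj (K $$ (x,a)) * K $$ (x,b)) Ks))"
  using assms
proof (induction Ks)
  case Nil
  then show ?case by simp
next
  case (Cons K Ks)
  have K: "K \<in> carrier_mat m d" using Cons.prems by simp
  have KA: "mat_adjoint K * K \<in> carrier_mat d d" using K adjoint_carrier[OF K] by auto
  have ent: "(mat_adjoint K * K) $$ (a,b) = (\<Sum>x<m. cnj (K $$ (x,a)) * K $$ (x,b))"
    if "a < d" "b < d" for a b
    using K adjoint_carrier[OF K] that by (subst mult_entry) (auto simp: adjoint_entry)
  show ?case using KA Cons ent by auto
qed



lemma block_split: fixes k d :: nat shows "(\<Sum>x<k*d. f x) = (\<Sum>j<k. \<Sum>a<d. f (j*d+a))"
proof -
  have "(\<Sum>x<k*d. f x) = (\<Sum>j<k. sum f {j*d..<j*d+d})" by (rule sum.nat_group[symmetric])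
  also have "\<dots> = (\<Sum>j<k. \<Sum>a<d. f (j*d+a))"
  proof -
    have "sum f {j*d..<j*d+d} = (\<Sum>a<d. f (j*d+a))" for j
    proof -
      have "sum f {0 + j*d..<d + j*d} = (\<Sum>a\<in>{0..<d}. f (a + j*d))" by (rule sum.shift_bounds_nat_ivl)
      then show ?thesis by (simp add: lessThan_atLeast0 add.commute)
    qed
    then show ?thesis by simp
  qed
  finally show ?thesis .
qed

lemma div_block: fixes a d j :: nat shows "a < d \<Longrightarrow> (j*d+a) div d = j" by simp
lemma mod_block: fixes a d j :: nat shows "a < d \<Longrightarrow> (j*d+a) mod d = a" by simp

lemma block_sum:
  fixes k d j :: nat
  assumes "j < k"
  shows "(\<Sum>x<k*d. if x div d = j then h x else 0) = (\<Sum>a<d. h (j*d+a))"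
proof -
  have "(\<Sum>x<k*d. if x div d = j then h x else 0) = (\<Sum>j'<k. \<Sum>a<d. if (j'*d+a) div d = j then h (j'*d+a) else 0)"
    by (rule block_split)
  also have "\<dots> = (\<Sum>j'<k. if j' = j then (\<Sum>a<d. h (j'*d+a)) else 0)"
    by (intro sum.cong refl) (auto simp: div_block)
  also have "\<dots> = (\<Sum>a<d. h (j*d+a))" using assms by simp
  finally show ?thesis .
qed

lemma block_decomp: fixes x k d :: nat shows "x < k*d \<Longrightarrow> x div d < k \<and> x = (x div d)*d + x mod d \<and> x mod d < d"
  by (metis div_mult_mod_eq less_mult_imp_div_less mod_less_divisor mult.commute nat_0_less_mult_iff zero_less_iff_neq_zero bot_nat_0.not_eq_extremum mult_0_right not_less_zero)



definition G :: "complex mat list \<Rightarrow> nat \<Rightarrow> nat \<Rightarrow> nat \<Rightarrow> (nat \<Rightarrow> nat \<Rightarrow> complex) \<Rightarrow> complex" where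
  "G Ks d x y F = sum_list (map (\<lambda>K. \<Sum>a<d. \<Sum>b<d. K $$ (x,a) * F a b * cnj (K $$ (y,b))) Ks)"

lemma ch_carrier: "\<forall>K\<in>set Ks. K \<in> carrier_mat m d \<Longrightarrow> \<rho> \<in> carrier_mat d d \<Longrightarrow> apply_channel m Ks \<rho> \<in> carrier_mat m m"
  using apply_channel_entry by blast

lemma ch_entry: "\<forall>K\<in>set Ks. K \<in> carrier_mat m d \<Longrightarrow> \<rho> \<in> carrier_mat d d \<Longrightarrow> x < m \<Longrightarrow> y < m \<Longrightarrow>
   apply_channel m Ks \<rho> $$ (x,y) = G Ks d x y (\<lambda>a b. \<rho> $$ (a,b))"
  using apply_channel_entry unfolding G_def by blast

lemma sum_list_swap: "sum_list (map (\<lambda>K. \<Sum>a\<in>A. f K a) Ks) = (\<Sum>a\<in>A. sum_list (map (\<lambda>K. f K a) Ks))"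
  by (induction Ks) (auto simp: sum.distrib)

lemma sum_list_cmult: "sum_list (map (\<lambda>K. (c::complex) * f K) Ks) = c * sum_list (map f Ks)"
  by (induction Ks) (auto simp: algebra_simps)

lemma sum_list_diff: "sum_list (map (\<lambda>K. (f K::complex) - g K) Ks) = sum_list (map f Ks) - sum_list (map g Ks)"
  by (induction Ks) (auto simp: algebra_simps)

lemma sum_list_cong: "(\<And>K. K \<in> set Ks \<Longrightarrow> f K = g K) \<Longrightarrow> sum_list (map f Ks) = sum_list (map g Ks)"
  by (induction Ks) auto

lemma G_sum: "finite S \<Longrightarrow> G Ks d x y (\<lambda>a b. \<Sum>j\<in>S. f j a b) = (\<Sum>j\<in>S. G Ks d x y (f j))"
proof -
  have "(\<Sum>a<d. \<Sum>b<d. K $$ (x,a) * (\<Sum>j\<in>S. f j a b) * cnj (K $$ (y,b))) =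
        (\<Sum>j\<in>S. \<Sum>a<d. \<Sum>b<d. K $$ (x,a) * f j a b * cnj (K $$ (y,b)))" for K
  proof -
    have "(\<Sum>a<d. \<Sum>b<d. K $$ (x,a) * (\<Sum>j\<in>S. f j a b) * cnj (K $$ (y,b))) =
          (\<Sum>a<d. \<Sum>b<d. \<Sum>j\<in>S. K $$ (x,a) * f j a b * cnj (K $$ (y,b)))"
      by (simp add: sum_distrib_left sum_distrib_right)
    also have "\<dots> = (\<Sum>a<d. \<Sum>j\<in>S. \<Sum>b<d. K $$ (x,a) * f j a b * cnj (K $$ (y,b)))"
      by (intro sum.cong refl sum.swap)
    also have "\<dots> = (\<Sum>j\<in>S. \<Sum>a<d. \<Sum>b<d. K $$ (x,a) * f j a b * cnj (K $$ (y,b)))"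
      by (rule sum.swap)
    finally show ?thesis .
  qed
  then show ?thesis unfolding G_def by (simp add: sum_list_swap)
qed

lemma G_scale: "G Ks d x y (\<lambda>a b. c * F a b) = c * G Ks d x y F"
proof -
  have "(\<Sum>a<d. \<Sum>b<d. K $$ (x,a) * (c * F a b) * cnj (K $$ (y,b))) =
        c * (\<Sum>a<d. \<Sum>b<d. K $$ (x,a) * F a b * cnj (K $$ (y,b)))" for K
    by (simp add: sum_distrib_left mult_ac)
  then show ?thesis unfolding G_def by (simp add: sum_list_cmult)
qed

lemma G_diff: "G Ks d x y (\<lambda>a b. F a b - H a b) = G Ks d x y F - G Ks d x y H"
proof -
  have "(\<Sum>a<d. \<Sum>b<d. K $$ (x,a) * (F a b - H a b) * cnj (K $$ (y,b))) =
        (\<Sum>a<d. \<Sum>b<d. K $$ (x,a) * F a b * cnj (K $$ (y,b))) - (\<Sum>a<d. \<Sum>b<d. K $$ (x,a) * H a b * cnj (K $$ (y,b)))" for K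
    by (simp add: algebra_simps sum_subtractf)
  then show ?thesis unfolding G_def by (simp add: sum_list_diff)
qed

lemma quad_single:
  fixes K :: "complex mat"
  shows "(\<Sum>x<m. \<Sum>y<m. cnj (v x) * (\<Sum>a<d. \<Sum>b<d. K $$ (x,a) * F a b * cnj (K $$ (y,b))) * v y) =
    (\<Sum>a<d. \<Sum>b<d. cnj (\<Sum>x<m. cnj (K $$ (x,a)) * v x) * F a b * (\<Sum>y<m. cnj (K $$ (y,b)) * v y))"
proof -
  define T where "T x y a b = cnj (v x) * K $$ (x,a) * F a b * cnj (K $$ (y,b)) * v y" for x y a b
  have "(\<Sum>x<m. \<Sum>y<m. cnj (v x) * (\<Sum>a<d. \<Sum>b<d. K $$ (x,a) * F a b * cnj (K $$ (y,b))) * v y) =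
        (\<Sum>x<m. \<Sum>y<m. \<Sum>a<d. \<Sum>b<d. T x y a b)"
    unfolding T_def by (simp add: sum_distrib_left sum_distrib_right mult_ac)
  also have "\<dots> = (\<Sum>x<m. \<Sum>a<d. \<Sum>y<m. \<Sum>b<d. T x y a b)"
    by (intro sum.cong refl sum.swap)
  also have "\<dots> = (\<Sum>a<d. \<Sum>x<m. \<Sum>y<m. \<Sum>b<d. T x y a b)"
    by (rule sum.swap)
  also have "\<dots> = (\<Sum>a<d. \<Sum>x<m. \<Sum>b<d. \<Sum>y<m. T x y a b)"
    by (intro sum.cong refl sum.swap)
  also have "\<dots> = (\<Sum>a<d. \<Sum>b<d. \<Sum>x<m. \<Sum>y<m. T x y a b)"
    by (intro sum.cong refl sum.swap)
  also have "\<dots> = (\<Sum>a<d. \<Sum>b<d. cnj (\<Sum>x<m. cnj (K $$ (x,a)) * v x) * F a b * (\<Sum>y<m. cnj (K $$ (y,b)) * v y))"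
    unfolding T_def by (simp add: sum_distrib_left sum_distrib_right mult_ac)
  finally show ?thesis .
qed

lemma nn_sum_list: "(\<And>K. K \<in> set Ks \<Longrightarrow> nn (f K)) \<Longrightarrow> nn (sum_list (map f Ks))"
  by (induction Ks) (auto simp: nn_add, simp add: nn_def)

lemma ch_psd:
  assumes K: "\<forall>K\<in>set Ks. K \<in> carrier_mat m d" and p: "psd d \<rho>"
  shows "psd m (apply_channel m Ks \<rho>)"
proof -
  have r: "\<rho> \<in> carrier_mat d d" using p unfolding psd_def by simp
  have "nn (Q m (apply_channel m Ks \<rho>) v)" for v
  proof -
    have "Q m (apply_channel m Ks \<rho>) v = (\<Sum>x<m. \<Sum>y<m. cnj (v x) * G Ks d x y (\<lambda>a b. \<rho> $$ (a,b)) * v y)"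
      unfolding Q_def using ch_entry[OF K r] by (intro sum.cong refl) auto
    also have "\<dots> = sum_list (map (\<lambda>K. \<Sum>x<m. \<Sum>y<m. cnj (v x) * (\<Sum>a<d. \<Sum>b<d. K $$ (x,a) * \<rho> $$ (a,b) * cnj (K $$ (y,b))) * v y) Ks)"
      unfolding G_def by (simp add: sum_list_swap sum_list_cmult sum_list_cmult[where c = "v _", symmetric] mult.commute[where b = "v _"])
    also have "\<dots> = sum_list (map (\<lambda>K. Q d \<rho> (\<lambda>b. \<Sum>y<m. cnj (K $$ (y,b)) * v y)) Ks)"
      unfolding quad_single Q_def by simp
    finally show ?thesis using p unfolding psd_iff by (simp add: nn_sum_list)
  qed
  then show ?thesis unfolding psd_iff using ch_carrier[OF K r] by simp
qed



lemma ch_TP: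
  assumes "is_channel d m Ks" "a < d" "b < d"
  shows "sum_list (map (\<lambda>K. \<Sum>x<m. cnj (K $$ (x,a)) * K $$ (x,b)) Ks) = (if a = b then 1 else 0)"
proof -
  have K: "\<forall>K\<in>set Ks. K \<in> carrier_mat m d" using assms(1) unfolding is_channel_def by simp
  have eq: "foldr (\<lambda>K acc. mat_adjoint K * K + acc) Ks (0\<^sub>m d d) = 1\<^sub>m d" using assms(1) unfolding is_channel_def by simp
  have "sum_list (map (\<lambda>K. \<Sum>x<m. cnj (K $$ (x,a)) * K $$ (x,b)) Ks) = foldr (\<lambda>K acc. mat_adjoint K * K + acc) Ks (0\<^sub>m d d) $$ (a,b)"
    using channel_TP_entry[OF K] assms(2,3) by simp
  also have "\<dots> = 1\<^sub>m d $$ (a,b)" unfolding eq ..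
  finally show ?thesis using assms(2,3) by simp
qed

lemma ch_trace:
  assumes c: "is_channel d m Ks" and r: "\<rho> \<in> carrier_mat d d"
  shows "(\<Sum>x<m. apply_channel m Ks \<rho> $$ (x,x)) = (\<Sum>a<d. \<rho> $$ (a,a))"
proof -
  have K: "\<forall>K\<in>set Ks. K \<in> carrier_mat m d" using c unfolding is_channel_def by simp
  have "(\<Sum>x<m. apply_channel m Ks \<rho> $$ (x,x)) = (\<Sum>x<m. G Ks d x x (\<lambda>a b. \<rho> $$ (a,b)))"
    using ch_entry[OF K r] by simp
  also have "\<dots> = sum_list (map (\<lambda>K. \<Sum>x<m. \<Sum>a<d. \<Sum>b<d. K $$ (x,a) * \<rho> $$ (a,b) * cnj (K $$ (x,b))) Ks)"
    unfolding G_def by (simp add: sum_list_swap)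
  also have "\<dots> = sum_list (map (\<lambda>K. \<Sum>a<d. \<Sum>b<d. \<rho> $$ (a,b) * (\<Sum>x<m. cnj (K $$ (x,b)) * K $$ (x,a))) Ks)"
  proof (rule sum_list_cong)
    fix K :: "complex mat"
    have "(\<Sum>x<m. \<Sum>a<d. \<Sum>b<d. K $$ (x,a) * \<rho> $$ (a,b) * cnj (K $$ (x,b))) =
          (\<Sum>a<d. \<Sum>x<m. \<Sum>b<d. K $$ (x,a) * \<rho> $$ (a,b) * cnj (K $$ (x,b)))" by (rule sum.swap)
    also have "\<dots> = (\<Sum>a<d. \<Sum>b<d. \<Sum>x<m. K $$ (x,a) * \<rho> $$ (a,b) * cnj (K $$ (x,b)))"
      by (intro sum.cong refl sum.swap)
    also have "\<dots> = (\<Sum>a<d. \<Sum>b<d. \<rho> $$ (a,b) * (\<Sum>x<m. cnj (K $$ (x,b)) * K $$ (x,a)))"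
      by (simp add: sum_distrib_left mult_ac)
    finally show "(\<Sum>x<m. \<Sum>a<d. \<Sum>b<d. K $$ (x,a) * \<rho> $$ (a,b) * cnj (K $$ (x,b))) =
          (\<Sum>a<d. \<Sum>b<d. \<rho> $$ (a,b) * (\<Sum>x<m. cnj (K $$ (x,b)) * K $$ (x,a)))" .
  qed
  also have "\<dots> = (\<Sum>a<d. \<Sum>b<d. \<rho> $$ (a,b) * sum_list (map (\<lambda>K. \<Sum>x<m. cnj (K $$ (x,b)) * K $$ (x,a)) Ks))"
    by (simp add: sum_list_swap sum_list_cmult)
  also have "\<dots> = (\<Sum>a<d. \<Sum>b<d. \<rho> $$ (a,b) * (if b = a then 1 else 0))"
    using ch_TP[OF c] by (intro sum.cong refl) simp
  also have "\<dots> = (\<Sum>a<d. \<rho> $$ (a,a))"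
    by (intro sum.cong refl) (simp add: sum_delta_mult')
  finally show ?thesis .
qed

lemma sum_two:
  fixes f :: "nat \<Rightarrow> complex"
  assumes "i < n" "j < n" "i \<noteq> j"
  shows "(\<Sum>b<n. f b * ((if b = i then s else 0) + (if b = j then 1 else 0))) = f i * s + f j"
proof -
  have "(\<Sum>b<n. f b * ((if b = i then s else 0) + (if b = j then 1 else 0))) =
        (\<Sum>b<n. (if b = i then f i * s else 0)) + (\<Sum>b<n. (if b = j then f j else 0))"
    using assms(3) by (subst sum.distrib[symmetric]) (intro sum.cong refl, auto)
  then show ?thesis using assms by simp
qed

lemma Q_two:
  assumes "A \<in> carrier_mat n n" "i < n" "j < n" "i \<noteq> j"
  shows "Q n A (\<lambda>l. (if l = i then s else 0) + (if l = j then 1 else 0)) =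
    cnj s * s * A $$ (i,i) + cnj s * A $$ (i,j) + s * A $$ (j,i) + A $$ (j,j)"
proof -
  have "Q n A (\<lambda>l. (if l = i then s else 0) + (if l = j then 1 else 0)) =
     (\<Sum>a<n. (\<Sum>b<n. A $$ (a,b) * ((if b = i then s else 0) + (if b = j then 1 else 0))) * cnj ((if a = i then s else 0) + (if a = j then 1 else 0)))"
    unfolding Q_def by (simp add: sum_distrib_left sum_distrib_right mult_ac)
  also have "\<dots> = (\<Sum>a<n. (A $$ (a,i) * s + A $$ (a,j)) * cnj ((if a = i then s else 0) + (if a = j then 1 else 0)))"
    using assms by (simp add: sum_two)
  also have "\<dots> = (\<Sum>a<n. (A $$ (a,i) * s + A $$ (a,j)) * ((if a = i then cnj s else 0) + (if a = j then 1 else 0)))"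
    by (intro sum.cong refl) auto
  also have "\<dots> = (A $$ (i,i) * s + A $$ (i,j)) * cnj s + (A $$ (j,i) * s + A $$ (j,j))"
    using assms by (subst sum_two) auto
  finally show ?thesis by (simp add: algebra_simps)
qed

lemma Q_unit:
  assumes "A \<in> carrier_mat n n" "i < n"
  shows "Q n A (\<lambda>l. if l = i then 1 else 0) = A $$ (i,i)"
proof -
  have "Q n A (\<lambda>l. if l = i then 1 else 0) = (\<Sum>a<n. cnj (if a = i then 1 else 0) * (\<Sum>b<n. A $$ (a,b) * (if b = i then 1 else 0)))"
    unfolding Q_def by (simp add: sum_distrib_left mult_ac)
  also have "\<dots> = (\<Sum>a<n. (if a = i then 1 else 0) * A $$ (a,i))"
    using assms by (intro sum.cong refl) (simp add: sum_delta_mult')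
  also have "\<dots> = A $$ (i,i)" using assms by (simp add: sum_delta_mult)
  finally show ?thesis .
qed

lemma psd_diag: assumes "psd n A" "i < n" shows "nn (A $$ (i,i))"
proof -
  have "nn (Q n A (\<lambda>l. if l = i then 1 else 0))" "A \<in> carrier_mat n n" using assms(1) unfolding psd_iff by auto
  then show ?thesis using Q_unit assms(2) by simp
qed

lemma lin_nn_zero:
  assumes "\<And>t::real. nn (complex_of_real t * z + w)"
  shows "z = 0"
proof -
  have i0: "Im w = 0" using assms[of 0] unfolding nn_def by simp
  have "Im z = 0" using assms[of 1] i0 unfolding nn_def by simp
  moreover have "Re z = 0"
  proof (rule ccontr)
    assume nz: "Re z \<noteq> 0"
    have "Re w - (Re w + 1) \<ge> 0"
      using assms[of "- (Re w + 1) / Re z"] nz unfolding nn_def by simp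
    then show False by simp
  qed
  ultimately show ?thesis by (simp add: complex_eq_iff)
qed

lemma psd_zero_diag:
  assumes p: "psd n A" and i: "i < n" and j: "j < n" and z: "A $$ (i,i) = 0"
  shows "A $$ (i,j) = 0 \<and> A $$ (j,i) = 0"
proof (cases "i = j")
  case True then show ?thesis using z by simp
next
  case False
  have A: "A \<in> carrier_mat n n" using p unfolding psd_def by simp
  have q: "nn (Q n A (\<lambda>l. (if l = i then s else 0) + (if l = j then 1 else 0)))" for s
    using p unfolding psd_iff by simp
  have e1: "nn (complex_of_real t * (A $$ (i,j) + A $$ (j,i)) + A $$ (j,j))" for t
    using q[of "complex_of_real t"] unfolding Q_two[OF A i j False] z by (simp add: algebra_simps)
  have e2: "nn (complex_of_real t * (\<i> * A $$ (j,i) - \<i> * A $$ (i,j)) + A $$ (j,j))" for t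
    using q[of "\<i> * complex_of_real t"] unfolding Q_two[OF A i j False] z by (simp add: algebra_simps)
  have "A $$ (i,j) + A $$ (j,i) = 0" using lin_nn_zero e1 by blast
  moreover have "\<i> * A $$ (j,i) - \<i> * A $$ (i,j) = 0" using lin_nn_zero e2 by blast
  moreover have "\<i> * A $$ (j,i) - \<i> * A $$ (i,j) = \<i> * (A $$ (j,i) - A $$ (i,j))" by (simp add: right_diff_distrib)
  ultimately have "A $$ (j,i) = A $$ (i,j)" "A $$ (i,j) + A $$ (j,i) = 0" by auto
  then show ?thesis by auto
qed



lemma nn_mult_cnj: "nn (z * cnj z)"
  unfolding nn_def by (simp add: complex_mult_cnj) 

lemma nn_mult: "nn a \<Longrightarrow> nn b \<Longrightarrow> nn (a * b)"
  unfolding nn_def by simp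

lemma psd_gram:
  assumes "finite S"
  shows "psd n (mat n n (\<lambda>(a,b). \<Sum>i\<in>S. w i a * cnj (w i b)))"
proof -
  have eqQ: "Q n (mat n n (\<lambda>(a,b). \<Sum>i\<in>S. w i a * cnj (w i b))) v =
        (\<Sum>i\<in>S. (\<Sum>a<n. cnj (v a) * w i a) * cnj (\<Sum>b<n. cnj (v b) * w i b))" for v
  proof -
    have "Q n (mat n n (\<lambda>(a,b). \<Sum>i\<in>S. w i a * cnj (w i b))) v =
       (\<Sum>a<n. \<Sum>b<n. \<Sum>i\<in>S. cnj (v a) * w i a * (cnj (w i b) * v b))"
      unfolding Q_def by (intro sum.cong refl) (simp add: sum_distrib_left sum_distrib_right mult_ac)
    also have "\<dots> = (\<Sum>a<n. \<Sum>i\<in>S. \<Sum>b<n. cnj (v a) * w i a * (cnj (w i b) * v b))"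
      by (intro sum.cong refl sum.swap)
    also have "\<dots> = (\<Sum>i\<in>S. \<Sum>a<n. \<Sum>b<n. cnj (v a) * w i a * (cnj (w i b) * v b))"
      by (rule sum.swap)
    also have "\<dots> = (\<Sum>i\<in>S. (\<Sum>a<n. cnj (v a) * w i a) * cnj (\<Sum>b<n. cnj (v b) * w i b))"
      by (simp add: sum_distrib_left sum_distrib_right mult_ac)
    finally show ?thesis .
  qed
  have "nn (Q n (mat n n (\<lambda>(a,b). \<Sum>i\<in>S. w i a * cnj (w i b))) v)" for v
    unfolding eqQ by (intro nn_sum nn_mult_cnj)
  then show ?thesis unfolding psd_iff by simp
qed

lemma psd_diag_mat:
  assumes "\<And>a. a < n \<Longrightarrow> nn (c a)"
  shows "psd n (mat n n (\<lambda>(a,b). if a = b then c a else 0))"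
proof -
  have "Q n (mat n n (\<lambda>(a,b). if a = b then c a else 0)) v = (\<Sum>a<n. c a * (v a * cnj (v a)))" for v
  proof -
    have "Q n (mat n n (\<lambda>(a,b). if a = b then c a else 0)) v = (\<Sum>a<n. \<Sum>b<n. (if b = a then cnj (v a) * c a * v a else 0))"
      unfolding Q_def by (intro sum.cong refl) auto
    then show ?thesis by (simp add: mult_ac)
  qed
  then show ?thesis unfolding psd_iff using assms by (auto intro!: nn_sum nn_mult nn_mult_cnj)
qed

lemma psd_smult:
  assumes "psd n A" "c \<ge> 0"
  shows "psd n (complex_of_real c \<cdot>\<^sub>m A)"
proof -
  have A: "A \<in> carrier_mat n n" using assms unfolding psd_def by simp
  have "Q n (complex_of_real c \<cdot>\<^sub>m A) v = complex_of_real c * Q n A v" for v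
    unfolding Q_def using A by (simp add: sum_distrib_left mult_ac)
  moreover have "nn (complex_of_real c)" unfolding nn_def using assms by simp
  ultimately show ?thesis using assms A unfolding psd_iff by (auto intro: nn_mult)
qed

lemma psd_sub:
  fixes k d :: nat
  assumes p: "psd (k*d) M" and j: "j < k"
  shows "psd d (mat d d (\<lambda>(a1,a2). M $$ (j*d+a1, j*d+a2)))"
proof -
  have M: "M \<in> carrier_mat (k*d) (k*d)" using p unfolding psd_def by simp
  have "Q d (mat d d (\<lambda>(a1,a2). M $$ (j*d+a1, j*d+a2))) v = Q (k*d) M (\<lambda>x. if x div d = j then v (x mod d) else 0)" for v
  proof -
    have "Q (k*d) M (\<lambda>x. if x div d = j then v (x mod d) else 0) =
      (\<Sum>x<k*d. if x div d = j then (\<Sum>y<k*d. if y div d = j then cnj (v (x mod d)) * M $$ (x,y) * v (y mod d) else 0) else 0)"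
      unfolding Q_def by (intro sum.cong refl) (auto intro!: sum.cong)
    also have "\<dots> = (\<Sum>x<k*d. if x div d = j then (\<Sum>a2<d. cnj (v (x mod d)) * M $$ (x,j*d+a2) * v a2) else 0)"
      using j by (intro sum.cong refl) (simp add: block_sum)
    also have "\<dots> = (\<Sum>a1<d. \<Sum>a2<d. cnj (v a1) * M $$ (j*d+a1,j*d+a2) * v a2)"
      using j by (simp add: block_sum)
    also have "\<dots> = Q d (mat d d (\<lambda>(a1,a2). M $$ (j*d+a1, j*d+a2))) v"
      unfolding Q_def by (intro sum.cong refl) auto
    finally show ?thesis by simp
  qed
  then show ?thesis using p unfolding psd_iff by auto
qed

lemma G_cong: "(\<And>a b. a < d \<Longrightarrow> b < d \<Longrightarrow> F a b = F' a b) \<Longrightarrow> G Ks d x y F = G Ks d x y F'"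
  unfolding G_def by (intro sum_list_cong sum.cong refl) auto

definition R :: "nat \<Rightarrow> nat \<Rightarrow> complex mat" where
  "R d j = mat d d (\<lambda>(a,b). u d j a * cnj (u d j b))"

lemma R_carrier: "R d j \<in> carrier_mat d d" unfolding R_def by simp

lemma R_psd: "psd d (R d j)"
proof -
  have "R d j = mat d d (\<lambda>(a,b). \<Sum>i\<in>{j}. u d i a * cnj (u d i b))" unfolding R_def by simp
  then show ?thesis using psd_gram[of "{j}"] by simp
qed

lemma R_trace: "j < d \<Longrightarrow> mtrace (R d j) = 1"
  unfolding mtrace_def R_def using u_orth[of j d j] by simp

lemma R_density: "j < d \<Longrightarrow> density d (R d j)"
  unfolding density_def using R_psd R_trace by simp

lemma ket_bra_R: "j < d \<Longrightarrow> ket_bra (phi d j) = R d j"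
  unfolding R_def by (rule ket_bra_phi)

lemma one_mat_compl: "1\<^sub>m d = mat d d (\<lambda>(a,b). \<Sum>i<d. u d i a * cnj (u d i b))"
  by (rule eq_matI) (auto simp: u_compl)



definition robset :: "nat \<Rightarrow> complex mat \<Rightarrow> real set" where
  "robset n \<rho> = {s::real. s \<ge> 0 \<and> (\<exists>\<tau>. density n \<tau> \<and>
       incoherent n (complex_of_real (1/(1+s)) \<cdot>\<^sub>m (\<rho> + complex_of_real s \<cdot>\<^sub>m \<tau>)))}"

lemma robustness_robset: "robustness n \<rho> = Inf (robset n \<rho>)"
  unfolding robustness_def robset_def ..

lemma robustness_le: "s \<in> robset n \<rho> \<Longrightarrow> robustness n \<rho> \<le> s"
  unfolding robustness_robset by (rule cInf_lower) (auto simp: robset_def bdd_below_def)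

lemma robustness_ge: "robset n \<rho> \<noteq> {} \<Longrightarrow> (\<And>s. s \<in> robset n \<rho> \<Longrightarrow> c \<le> s) \<Longrightarrow> c \<le> robustness n \<rho>"
  unfolding robustness_robset by (rule cInf_greatest)

lemma mtrace_sum: "A \<in> carrier_mat n n \<Longrightarrow> mtrace A = (\<Sum>a<n. A $$ (a,a))"
  unfolding mtrace_def by simp

locale mio_ctx =
  fixes d k :: nat and Ks :: "complex mat list"
  assumes mio: "is_MIO d (k*d) Ks" and k1: "1 \<le> k" and kd: "k \<le> d"
begin

definition N where "N j = apply_channel (k*d) Ks (R d j)"
definition NI where "NI = apply_channel (k*d) Ks (1\<^sub>m d)"
definition NR where "NR = apply_channel (k*d) Ks (mat d d (\<lambda>(a,b). \<Sum>i\<in>{k..<d}. u d i a * cnj (u d i b)))"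

lemma d0: "d > 0" using k1 kd by simp

lemma chan: "is_channel d (k*d) Ks" using mio unfolding is_MIO_def by simp
lemma K: "\<forall>K\<in>set Ks. K \<in> carrier_mat (k*d) d" using chan unfolding is_channel_def by simp

lemma N_carrier: "N j \<in> carrier_mat (k*d) (k*d)"
  unfolding N_def using ch_carrier[OF K R_carrier] .
lemma N_psd: "psd (k*d) (N j)"
  unfolding N_def using ch_psd[OF K R_psd] .
lemma N_diag: "x < k*d \<Longrightarrow> nn (N j $$ (x,x))"
  using psd_diag[OF N_psd] .
lemma N_trace: "j < d \<Longrightarrow> (\<Sum>x<k*d. N j $$ (x,x)) = 1"
  unfolding N_def using ch_trace[OF chan R_carrier] R_trace mtrace_sum[OF R_carrier] by metis
lemma N_entry: "x < k*d \<Longrightarrow> y < k*d \<Longrightarrow> N j $$ (x,y) = G Ks d x y (\<lambda>a b. u d j a * cnj (u d j b))"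
  unfolding N_def by (subst ch_entry[OF K R_carrier]) (auto simp: R_def intro!: G_cong)

lemma one_psd: "psd d (1\<^sub>m d)"
proof -
  have eq: "1\<^sub>m d = mat d d (\<lambda>(a,b). if a = b then 1 else 0)" by (rule eq_matI) auto
  have "psd d (mat d d (\<lambda>(a,b). if a = b then 1 else 0))" by (rule psd_diag_mat) (simp add: nn_def)
  then show ?thesis by (subst eq)
qed

lemma NI_carrier: "NI \<in> carrier_mat (k*d) (k*d)"
  unfolding NI_def using ch_carrier[OF K] by simp
lemma NI_psd: "psd (k*d) NI"
  unfolding NI_def using ch_psd[OF K one_psd] .
lemma NI_diag: "x < k*d \<Longrightarrow> nn (NI $$ (x,x))"
  using psd_diag[OF NI_psd] .
lemma NI_trace: "(\<Sum>x<k*d. NI $$ (x,x)) = of_nat d"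
  unfolding NI_def by (subst ch_trace[OF chan]) auto
lemma NI_entry: "x < k*d \<Longrightarrow> y < k*d \<Longrightarrow> NI $$ (x,y) = G Ks d x y (\<lambda>a b. \<Sum>i<d. u d i a * cnj (u d i b))"
  unfolding NI_def by (subst ch_entry[OF K]) (auto simp: u_compl intro!: G_cong)

lemma NR_psd: "psd (k*d) NR"
  unfolding NR_def using ch_psd[OF K psd_gram[OF finite_atLeastLessThan]] .
lemma NR_entry: "x < k*d \<Longrightarrow> y < k*d \<Longrightarrow> NR $$ (x,y) = G Ks d x y (\<lambda>a b. \<Sum>i\<in>{k..<d}. u d i a * cnj (u d i b))"
  unfolding NR_def by (subst ch_entry[OF K]) (auto intro!: G_cong)

lemma NI_split:
  assumes "x < k*d" "y < k*d"
  shows "NI $$ (x,y) = (\<Sum>i<k. N i $$ (x,y)) + NR $$ (x,y)"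
proof -
  have "NI $$ (x,y) = (\<Sum>i<d. G Ks d x y (\<lambda>a b. u d i a * cnj (u d i b)))"
    unfolding NI_entry[OF assms] by (rule G_sum) simp
  also have "\<dots> = (\<Sum>i<k. G Ks d x y (\<lambda>a b. u d i a * cnj (u d i b))) + (\<Sum>i\<in>{k..<d}. G Ks d x y (\<lambda>a b. u d i a * cnj (u d i b)))"
    using kd by (simp add: lessThan_atLeast0 sum.atLeastLessThan_concat)
  also have "\<dots> = (\<Sum>i<k. N i $$ (x,y)) + NR $$ (x,y)"
    unfolding NR_entry[OF assms] N_entry[OF assms] by (subst G_sum) auto
  finally show ?thesis .
qed

lemma NI_offdiag:
  assumes "x < k*d" "y < k*d" "x \<noteq> y"
  shows "NI $$ (x,y) = 0"
proof -
  define I' where "I' = complex_of_real (1 / real d) \<cdot>\<^sub>m 1\<^sub>m d"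
  have I'c: "I' \<in> carrier_mat d d" unfolding I'_def by simp
  have "incoherent d I'"
  proof -
    have "psd d I'" unfolding I'_def by (rule psd_smult[OF one_psd]) simp
    moreover have "mtrace I' = 1"
    proof -
      have "mtrace I' = (\<Sum>a<d. I' $$ (a,a))" by (rule mtrace_sum[OF I'c])
      also have "\<dots> = (\<Sum>a<d. complex_of_real (1 / real d))" unfolding I'_def by simp
      finally show ?thesis using d0 by simp
    qed
    moreover have "diagonal_mat I'" unfolding I'_def diagonal_mat_def by simp
    ultimately show ?thesis unfolding incoherent_def density_def by simp
  qed
  then have "incoherent (k*d) (apply_channel (k*d) Ks I')" using mio unfolding is_MIO_def by simp
  then have dg: "diagonal_mat (apply_channel (k*d) Ks I')" unfolding incoherent_def by simp
  have "apply_channel (k*d) Ks I' $$ (x,y) = G Ks d x y (\<lambda>a b. complex_of_real (1 / real d) * 1\<^sub>m d $$ (a,b))"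
    using ch_entry[OF K I'c assms(1,2)] unfolding I'_def by (auto intro!: G_cong)
  also have "\<dots> = complex_of_real (1 / real d) * NI $$ (x,y)"
    unfolding G_scale NI_def ch_entry[OF K one_carrier_mat assms(1,2)] ..
  finally have "complex_of_real (1 / real d) * NI $$ (x,y) = 0"
    using dg ch_carrier[OF K I'c] assms unfolding diagonal_mat_def by auto
  then show ?thesis using d0 by simp
qed


definition pB where "pB j = proj_B_trace d j (N j)"

lemma N_split:
  assumes j: "j < k"
  shows "Re (pB j) + (\<Sum>x<k*d. if x div d = j then 0 else Re (N j $$ (x,x))) = 1"
proof -
  have jd: "j < d" using j kd by simp
  have "1 = Re (\<Sum>x<k*d. N j $$ (x,x))" using N_trace[OF jd] by simp
  also have "\<dots> = (\<Sum>x<k*d. (if x div d = j then Re (N j $$ (x,x)) else 0) + (if x div d = j then 0 else Re (N j $$ (x,x))))"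
    unfolding Re_sum by (intro sum.cong refl) auto
  also have "\<dots> = (\<Sum>x<k*d. if x div d = j then Re (N j $$ (x,x)) else 0) + (\<Sum>x<k*d. if x div d = j then 0 else Re (N j $$ (x,x)))"
    by (rule sum.distrib)
  also have "(\<Sum>x<k*d. if x div d = j then Re (N j $$ (x,x)) else 0) = (\<Sum>a<d. Re (N j $$ (j*d+a, j*d+a)))"
    using block_sum[OF j] .
  also have "\<dots> = Re (pB j)" unfolding pB_def proj_B_trace_def by (simp add: Re_sum)
  finally show ?thesis by simp
qed

lemma rest_nonneg: "j < k \<Longrightarrow> (\<Sum>x<k*d. if x div d = j then 0 else Re (N j $$ (x,x))) \<ge> 0"
  using N_diag unfolding nn_def by (intro sum_nonneg) auto

lemma pB_le: "j < k \<Longrightarrow> Re (pB j) \<le> 1"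
  using N_split rest_nonneg by fastforce

lemma pB_nn: "j < k \<Longrightarrow> nn (pB j)"
proof -
  assume j: "j < k"
  have "j * d + a < k * d" if "a < d" for a
    using j that by (metis add_lessD1 div_block div_less_iff_less_mult d0 mult.commute less_mult_imp_div_less)
  then show ?thesis unfolding pB_def proj_B_trace_def by (intro nn_sum N_diag) auto
qed

end

locale mio_succ = mio_ctx +
  assumes succ: "(\<Sum>j<k. (1 / real k) * Re (proj_B_trace d j (apply_channel (k*d) Ks (R d j)))) = 1"
begin

lemma pB_one: "j < k \<Longrightarrow> Re (pB j) = 1"
proof -
  assume j: "j < k"
  have "(\<Sum>j<k. Re (pB j)) = real k"
  proof -
    have "(1 / real k) * (\<Sum>j<k. Re (pB j)) = 1"
      using succ unfolding pB_def N_def by (simp add: sum_distrib_left)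
    then show ?thesis using k1 by (simp add: field_simps)
  qed
  then have "(\<Sum>j<k. 1 - Re (pB j)) = 0" by (simp add: sum_subtractf)
  moreover have "\<forall>i\<in>{..<k}. 0 \<le> 1 - Re (pB i)" using pB_le by simp
  ultimately have "\<forall>i\<in>{..<k}. 1 - Re (pB i) = 0"
    using sum_nonneg_eq_0_iff[of "{..<k}" "\<lambda>i. 1 - Re (pB i)"] by blast
  then show ?thesis using j by simp
qed

lemma pB_eq: "j < k \<Longrightarrow> pB j = 1"
  using pB_one pB_nn unfolding nn_def by (simp add: complex_eq_iff)

lemma N_off:
  assumes j: "j < k" and x: "x < k*d" and xj: "x div d \<noteq> j"
  shows "N j $$ (x,x) = 0"
proof -
  have "(\<Sum>x<k*d. if x div d = j then 0 else Re (N j $$ (x,x))) = 0"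
    using N_split[OF j] pB_one[OF j] by simp
  moreover have "\<forall>y\<in>{..<k*d}. 0 \<le> (if y div d = j then 0 else Re (N j $$ (y,y)))"
    using N_diag unfolding nn_def by simp
  ultimately have "\<forall>y\<in>{..<k*d}. (if y div d = j then 0 else Re (N j $$ (y,y))) = 0"
    using sum_nonneg_eq_0_iff[of "{..<k*d}" "\<lambda>y. if y div d = j then 0 else Re (N j $$ (y,y))"] by blast
  then have "Re (N j $$ (x,x)) = 0" using x xj by force
  then show ?thesis using N_diag[OF x] unfolding nn_def by (simp add: complex_eq_iff)
qed

lemma N_zero:
  assumes j: "j < k" and x: "x < k*d" and y: "y < k*d" and xj: "x div d \<noteq> j"
  shows "N j $$ (x,y) = 0 \<and> N j $$ (y,x) = 0"
  using psd_zero_diag[OF N_psd x y N_off[OF j x xj]] .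

end



context mio_succ
begin

lemma blk: "j < k \<Longrightarrow> a < d \<Longrightarrow> j*d + a < k*d"
proof -
  assume "j < k" "a < d"
  then have "j*d + a < j*d + d" by simp
  also have "\<dots> = (j+1)*d" by simp
  also have "\<dots> \<le> k*d" using \<open>j < k\<close> by (intro mult_right_mono) auto
  finally show ?thesis .
qed

lemma sigma_entry:
  assumes j: "j < k" and a1: "a1 < d" and a2: "a2 < d"
  shows "ptrace_B k d (N j) $$ (a1,a2) = N j $$ (j*d+a1, j*d+a2)"
proof -
  have "ptrace_B k d (N j) $$ (a1,a2) = (\<Sum>b<k. N j $$ (b*d+a1, b*d+a2))"
    unfolding ptrace_B_def using a1 a2 by simp
  also have "\<dots> = (\<Sum>b<k. if b = j then N j $$ (j*d+a1, j*d+a2) else 0)"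
  proof (intro sum.cong refl)
    fix b assume "b \<in> {..<k}"
    then have b: "b < k" by simp
    show "N j $$ (b*d+a1, b*d+a2) = (if b = j then N j $$ (j*d+a1, j*d+a2) else 0)"
      using N_zero[OF j blk[OF b a1] blk[OF b a2]] a1 by (auto simp: div_block)
  qed
  also have "\<dots> = N j $$ (j*d+a1, j*d+a2)" using j by simp
  finally show ?thesis .
qed

lemma sigma_carrier: "ptrace_B k d (N j) \<in> carrier_mat d d"
  unfolding ptrace_B_def by simp

lemma NR_block:
  assumes j: "j < k" and a1: "a1 < d" and a2: "a2 < d"
  shows "NR $$ (j*d+a1, j*d+a2) = NI $$ (j*d+a1, j*d+a2) - N j $$ (j*d+a1, j*d+a2)"
proof -
  have "(\<Sum>i<k. N i $$ (j*d+a1, j*d+a2)) = (\<Sum>i<k. if i = j then N j $$ (j*d+a1, j*d+a2) else 0)"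
  proof (intro sum.cong refl)
    fix i assume "i \<in> {..<k}"
    then have i: "i < k" by simp
    show "N i $$ (j*d+a1, j*d+a2) = (if i = j then N j $$ (j*d+a1, j*d+a2) else 0)"
      using N_zero[OF i blk[OF j a1] blk[OF j a2]] a1 by (auto simp: div_block)
  qed
  also have "\<dots> = N j $$ (j*d+a1, j*d+a2)" using j by simp
  finally show ?thesis using NI_split[OF blk[OF j a1] blk[OF j a2]] by simp
qed

definition t where "t j = Re (\<Sum>a<d. NI $$ (j*d+a, j*d+a))"

lemma t_complex: "j < k \<Longrightarrow> (\<Sum>a<d. NI $$ (j*d+a, j*d+a)) = complex_of_real (t j)"
proof -
  assume j: "j < k"
  have "nn (\<Sum>a<d. NI $$ (j*d+a, j*d+a))" by (intro nn_sum NI_diag blk[OF j]) simp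
  then show ?thesis unfolding t_def nn_def by (simp add: complex_eq_iff)
qed

lemma sum_t: "(\<Sum>j<k. t j) = real d"
proof -
  have "(\<Sum>j<k. t j) = Re (\<Sum>j<k. \<Sum>a<d. NI $$ (j*d+a, j*d+a))" unfolding t_def by (simp add: Re_sum)
  also have "\<dots> = Re (\<Sum>x<k*d. NI $$ (x,x))" by (simp add: block_split)
  also have "\<dots> = real d" by (simp add: NI_trace)
  finally show ?thesis .
qed

lemma rob_mem:
  assumes j: "j < k"
  shows "t j - 1 \<in> robset d (ptrace_B k d (N j))"
proof -
  define \<sigma> where "\<sigma> = ptrace_B k d (N j)"
  define B where "B = mat d d (\<lambda>(a1,a2). NR $$ (j*d+a1, j*d+a2))"
  define s where "s = t j - 1"
  have Bp: "psd d B" unfolding B_def by (rule psd_sub[OF NR_psd j])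
  have Bc: "B \<in> carrier_mat d d" unfolding B_def by simp
  have sc: "\<sigma> \<in> carrier_mat d d" unfolding \<sigma>_def by (rule sigma_carrier)
  have trs: "(\<Sum>a<d. N j $$ (j*d+a, j*d+a)) = 1" using pB_eq[OF j] unfolding pB_def proj_B_trace_def .
  have trB: "(\<Sum>a<d. B $$ (a,a)) = complex_of_real s"
  proof -
    have "(\<Sum>a<d. B $$ (a,a)) = (\<Sum>a<d. NI $$ (j*d+a, j*d+a) - N j $$ (j*d+a, j*d+a))"
      unfolding B_def by (intro sum.cong refl) (simp add: NR_block[OF j])
    also have "\<dots> = complex_of_real (t j) - 1" by (simp add: sum_subtractf t_complex[OF j] trs)
    finally show ?thesis unfolding s_def by simp
  qed
  have Bnn: "nn (\<Sum>a<d. B $$ (a,a))" by (intro nn_sum psd_diag[OF Bp]) simp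
  have s0: "s \<ge> 0" using Bnn unfolding trB nn_def by simp
  have ex: "\<exists>\<tau>. density d \<tau> \<and> (\<forall>a1<d. \<forall>a2<d. \<sigma> $$ (a1,a2) + complex_of_real s * \<tau> $$ (a1,a2) = NI $$ (j*d+a1, j*d+a2))"
  proof (cases "s > 0")
    case True
    define \<tau> where "\<tau> = complex_of_real (1/s) \<cdot>\<^sub>m B"
    have "psd d \<tau>" unfolding \<tau>_def by (rule psd_smult[OF Bp]) (use True in simp)
    moreover have "mtrace \<tau> = 1"
    proof -
      have "mtrace \<tau> = (\<Sum>a<d. \<tau> $$ (a,a))" by (rule mtrace_sum) (simp add: \<tau>_def Bc)
      also have "\<dots> = complex_of_real (1/s) * (\<Sum>a<d. B $$ (a,a))"
        unfolding \<tau>_def using Bc by (simp add: sum_distrib_left)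
      also have "\<dots> = 1" unfolding trB using True by (simp flip: of_real_mult)
      finally show ?thesis .
    qed
    moreover have "\<sigma> $$ (a1,a2) + complex_of_real s * \<tau> $$ (a1,a2) = NI $$ (j*d+a1, j*d+a2)"
      if "a1 < d" "a2 < d" for a1 a2
    proof -
      have "complex_of_real s * \<tau> $$ (a1,a2) = B $$ (a1,a2)"
        unfolding \<tau>_def using that Bc True by (simp flip: of_real_mult)
      then show ?thesis unfolding \<sigma>_def using that
        by (simp add: sigma_entry[OF j] B_def NR_block[OF j])
    qed
    ultimately show ?thesis unfolding density_def by blast
  next
    case False
    then have s00: "s = 0" using s0 by simp
    have "\<forall>a\<in>{..<d}. Re (B $$ (a,a)) = 0"
    proof -
      have "(\<Sum>a<d. Re (B $$ (a,a))) = 0" using trB s00 by (simp flip: Re_sum)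
      moreover have "\<forall>a\<in>{..<d}. 0 \<le> Re (B $$ (a,a))" using psd_diag[OF Bp] unfolding nn_def by simp
      ultimately show ?thesis using sum_nonneg_eq_0_iff[of "{..<d}" "\<lambda>a. Re (B $$ (a,a))"] by blast
    qed
    then have Bd: "B $$ (a,a) = 0" if "a < d" for a
      using psd_diag[OF Bp that] that unfolding nn_def by (simp add: complex_eq_iff)
    have "\<sigma> $$ (a1,a2) = NI $$ (j*d+a1, j*d+a2)" if "a1 < d" "a2 < d" for a1 a2
    proof -
      have "B $$ (a1,a2) = 0" using psd_zero_diag[OF Bp that Bd[OF that(1)]] by simp
      then show ?thesis unfolding \<sigma>_def using that
        by (simp add: sigma_entry[OF j] B_def NR_block[OF j])
    qed
    then show ?thesis using R_density[OF d0] s00 by auto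
  qed
  then obtain \<tau> where td: "density d \<tau>" and te: "\<forall>a1<d. \<forall>a2<d. \<sigma> $$ (a1,a2) + complex_of_real s * \<tau> $$ (a1,a2) = NI $$ (j*d+a1, j*d+a2)"
    by blast
  have tc: "\<tau> \<in> carrier_mat d d" using td unfolding density_def psd_def by simp
  have tpos: "t j > 0" using s0 unfolding s_def by simp
  define M where "M = complex_of_real (1/(1+s)) \<cdot>\<^sub>m (\<sigma> + complex_of_real s \<cdot>\<^sub>m \<tau>)"
  have Ment: "M $$ (a,b) = (if a = b then NI $$ (j*d+a, j*d+a) / complex_of_real (t j) else 0)"
    if ab: "a < d" "b < d" for a b
  proof -
    have "M $$ (a,b) = complex_of_real (1/(1+s)) * (\<sigma> $$ (a,b) + complex_of_real s * \<tau> $$ (a,b))"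
      unfolding M_def using sc tc ab by simp
    also have "\<dots> = NI $$ (j*d+a, j*d+b) / complex_of_real (t j)"
      using te ab unfolding s_def by (simp add: divide_inverse mult.commute)
    also have "\<dots> = (if a = b then NI $$ (j*d+a, j*d+a) / complex_of_real (t j) else 0)"
      using NI_offdiag[OF blk[OF j ab(1)] blk[OF j ab(2)]] by auto
    finally show ?thesis .
  qed
  have Meq: "M = mat d d (\<lambda>(a,b). if a = b then NI $$ (j*d+a, j*d+a) / complex_of_real (t j) else 0)"
  proof -
    have Mc: "M \<in> carrier_mat d d" unfolding M_def using sc tc by simp
    show ?thesis by (rule eq_matI) (use Mc Ment in auto)
  qed
  have "incoherent d M"
  proof -
    have "psd d M" unfolding Meq
    proof (rule psd_diag_mat)
      fix a assume "a < d"
      then have "nn (NI $$ (j*d+a, j*d+a))" using NI_diag blk[OF j] by simp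
      then show "nn (NI $$ (j*d+a, j*d+a) / complex_of_real (t j))" using tpos unfolding nn_def by simp
    qed
    moreover have "mtrace M = 1"
    proof -
      have "mtrace M = (\<Sum>a<d. NI $$ (j*d+a, j*d+a) / complex_of_real (t j))"
        unfolding Meq mtrace_def by simp
      also have "\<dots> = 1" using t_complex[OF j] tpos by (simp flip: sum_divide_distrib)
      finally show ?thesis .
    qed
    moreover have "diagonal_mat M" unfolding Meq diagonal_mat_def by simp
    ultimately show ?thesis unfolding incoherent_def density_def by simp
  qed
  then have "s \<in> robset d \<sigma>" unfolding robset_def M_def using s0 td by blast
  then show ?thesis unfolding s_def \<sigma>_def .
qed

lemma rob_upper: "(\<Sum>j<k. (1 / real k) * robustness d (ptrace_B k d (N j))) \<le> (real d - real k) / real k"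
proof -
  have "(\<Sum>j<k. (1 / real k) * robustness d (ptrace_B k d (N j))) \<le> (\<Sum>j<k. (1 / real k) * (t j - 1))"
    using rob_mem robustness_le k1 by (intro sum_mono mult_left_mono) auto
  also have "\<dots> = (1 / real k) * ((\<Sum>j<k. t j) - real k)" by (simp only: sum_distrib_left[symmetric] sum_subtractf) simp
  also have "\<dots> = (real d - real k) / real k" by (simp add: sum_t)
  finally show ?thesis .
qed

end



lemma matsum_entry:
  assumes "\<And>i. i < n \<Longrightarrow> f i \<in> carrier_mat d d"
  shows "matsum d f n \<in> carrier_mat d d \<and> (\<forall>a<d. \<forall>b<d. matsum d f n $$ (a,b) = (\<Sum>i<n. f i $$ (a,b)))"
  using assms
proof (induction n)
  case 0 then show ?case by simp
next
  case (Suc n)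
  have c1: "matsum d f n \<in> carrier_mat d d" using Suc by simp
  have c2: "f n \<in> carrier_mat d d" using Suc.prems by simp
  show ?case using Suc c1 c2 carrier_matD[OF c2] by simp
qed

lemma Q_cong: "(\<And>a b. a < n \<Longrightarrow> b < n \<Longrightarrow> A $$ (a,b) = B $$ (a,b)) \<Longrightarrow> Q n A v = Q n B v"
  unfolding Q_def by (intro sum.cong refl) auto

lemma Q_sum_entries:
  "Q n (mat n n (\<lambda>(a,b). \<Sum>i\<in>S. F i a b)) v = (\<Sum>i\<in>S. Q n (mat n n (\<lambda>(a,b). F i a b)) v)"
proof -
  have "Q n (mat n n (\<lambda>(a,b). \<Sum>i\<in>S. F i a b)) v = (\<Sum>a<n. \<Sum>b<n. \<Sum>i\<in>S. cnj (v a) * F i a b * v b)"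
    unfolding Q_def by (intro sum.cong refl) (simp add: sum_distrib_left sum_distrib_right)
  also have "\<dots> = (\<Sum>a<n. \<Sum>i\<in>S. \<Sum>b<n. cnj (v a) * F i a b * v b)" by (intro sum.cong refl sum.swap)
  also have "\<dots> = (\<Sum>i\<in>S. \<Sum>a<n. \<Sum>b<n. cnj (v a) * F i a b * v b)" by (rule sum.swap)
  also have "\<dots> = (\<Sum>i\<in>S. Q n (mat n n (\<lambda>(a,b). F i a b)) v)"
    unfolding Q_def by (intro sum.cong refl) auto
  finally show ?thesis .
qed

lemma trace_R:
  assumes "E \<in> carrier_mat d d"
  shows "mtrace (E * R d j) = Q d E (u d j)"
proof -
  have "mtrace (E * R d j) = (\<Sum>a<d. (E * R d j) $$ (a,a))" using assms R_carrier by (simp add: mtrace_sum)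
  also have "\<dots> = (\<Sum>a<d. \<Sum>b<d. E $$ (a,b) * (u d j b * cnj (u d j a)))"
  proof (intro sum.cong refl)
    fix a assume "a \<in> {..<d}"
    then have a: "a < d" by simp
    show "(E * R d j) $$ (a,a) = (\<Sum>b<d. E $$ (a,b) * (u d j b * cnj (u d j a)))"
      using a by (subst mult_entry[OF assms R_carrier a a]) (simp add: R_def)
  qed
  also have "\<dots> = Q d E (u d j)" unfolding Q_def by (intro sum.cong refl) (simp add: mult_ac)
  finally show ?thesis .
qed

lemma Q_one_u: "j < d \<Longrightarrow> Q d (1\<^sub>m d) (u d j) = 1"
proof -
  assume j: "j < d"
  have "Q d (1\<^sub>m d) (u d j) = (\<Sum>a<d. \<Sum>b<d. if b = a then cnj (u d j a) * u d j b else 0)"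
    unfolding Q_def by (intro sum.cong refl) auto
  also have "\<dots> = (\<Sum>a<d. u d j a * cnj (u d j a))" by (simp add: mult.commute)
  also have "\<dots> = 1" using u_orth[OF j j] by simp
  finally show ?thesis .
qed

lemma POVM_bound:
  assumes P: "is_POVM d k E" and j: "j < k" and kd: "k \<le> d"
  shows "Re (mtrace (E j * R d j)) \<le> 1"
proof -
  have Ec: "E i \<in> carrier_mat d d" if "i < k" for i using P that unfolding is_POVM_def psd_def by simp
  have En: "nn (Q d (E i) v)" if "i < k" for i v using P that unfolding is_POVM_def psd_iff by simp
  have ms: "matsum d E k = 1\<^sub>m d" using P unfolding is_POVM_def by simp
  have "1 = Q d (matsum d E k) (u d j)" using Q_one_u j kd ms by simp
  also have "\<dots> = Q d (mat d d (\<lambda>(a,b). \<Sum>i<k. E i $$ (a,b))) (u d j)"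
    using matsum_entry[of k E d] Ec by (intro Q_cong) auto
  also have "\<dots> = (\<Sum>i<k. Q d (E i) (u d j))"
    unfolding Q_sum_entries using Ec by (intro sum.cong refl Q_cong) auto
  finally have "1 = Re (\<Sum>i<k. Q d (E i) (u d j))" by simp
  also have "\<dots> = (\<Sum>i<k. Re (Q d (E i) (u d j)))" by (simp add: Re_sum)
  also have "\<dots> \<ge> Re (Q d (E j) (u d j))"
    using En j unfolding nn_def by (intro member_le_sum) auto
  finally show ?thesis using trace_R[OF Ec[OF j]] by simp
qed

definition Sset :: "nat \<Rightarrow> nat \<Rightarrow> nat \<Rightarrow> nat set" where
  "Sset d k j = (if j = k - 1 then {k-1..<d} else {j})"

definition Eopt :: "nat \<Rightarrow> nat \<Rightarrow> nat \<Rightarrow> complex mat" where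
  "Eopt d k j = mat d d (\<lambda>(a,b). \<Sum>i\<in>Sset d k j. u d i a * cnj (u d i b))"

lemma Sset_partition:
  fixes f :: "nat \<Rightarrow> complex"
  assumes "1 \<le> k" "k \<le> d"
  shows "(\<Sum>j<k. \<Sum>i\<in>Sset d k j. f i) = (\<Sum>i<d. f i)"
proof -
  obtain k' where k': "k = Suc k'" using assms by (cases k) auto
  have "(\<Sum>j<k. \<Sum>i\<in>Sset d k j. f i) = (\<Sum>j<k'. \<Sum>i\<in>Sset d k j. f i) + (\<Sum>i\<in>Sset d k k'. f i)"
    unfolding k' by simp
  also have "(\<Sum>j<k'. \<Sum>i\<in>Sset d k j. f i) = (\<Sum>j<k'. f j)"
    unfolding Sset_def k' by (intro sum.cong refl) auto
  also have "(\<Sum>i\<in>Sset d k k'. f i) = (\<Sum>i\<in>{k'..<d}. f i)" unfolding Sset_def k' by simp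
  also have "(\<Sum>j<k'. f j) + (\<Sum>i\<in>{k'..<d}. f i) = (\<Sum>i<d. f i)"
    using assms k' by (simp add: lessThan_atLeast0 sum.atLeastLessThan_concat)
  finally show ?thesis .
qed

lemma Eopt_POVM:
  assumes "1 \<le> k" "k \<le> d"
  shows "is_POVM d k (Eopt d k)"
proof -
  have "psd d (Eopt d k j)" for j unfolding Eopt_def by (rule psd_gram) (simp add: Sset_def)
  moreover have "matsum d (Eopt d k) k = 1\<^sub>m d"
  proof (rule eq_matI)
    have mc: "matsum d (Eopt d k) k \<in> carrier_mat d d" using matsum_entry[of k "Eopt d k" d] by (simp add: Eopt_def)
    then show "dim_row (matsum d (Eopt d k) k) = dim_row (1\<^sub>m d)" "dim_col (matsum d (Eopt d k) k) = dim_col (1\<^sub>m d)" by auto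
    fix a b assume "a < dim_row (1\<^sub>m d)" "b < dim_col (1\<^sub>m d)"
    then have ab: "a < d" "b < d" by auto
    have "matsum d (Eopt d k) k $$ (a,b) = (\<Sum>j<k. Eopt d k j $$ (a,b))"
      using matsum_entry[of k "Eopt d k" d] ab by (simp add: Eopt_def)
    also have "\<dots> = (\<Sum>j<k. \<Sum>i\<in>Sset d k j. u d i a * cnj (u d i b))" unfolding Eopt_def using ab by simp
    also have "\<dots> = (\<Sum>i<d. u d i a * cnj (u d i b))" by (rule Sset_partition[OF assms])
    also have "\<dots> = 1\<^sub>m d $$ (a,b)" using ab by (simp add: u_compl)
    finally show "matsum d (Eopt d k) k $$ (a,b) = 1\<^sub>m d $$ (a,b)" .
  qed
  ultimately show ?thesis unfolding is_POVM_def by simp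
qed

lemma Eopt_value:
  assumes "j < k" "k \<le> d"
  shows "mtrace (Eopt d k j * R d j) = 1"
proof -
  have jd: "j < d" using assms by simp
  have "mtrace (Eopt d k j * R d j) = Q d (Eopt d k j) (u d j)" by (rule trace_R) (simp add: Eopt_def)
  also have "\<dots> = (\<Sum>i\<in>Sset d k j. Q d (mat d d (\<lambda>(a,b). u d i a * cnj (u d i b))) (u d j))"
    unfolding Eopt_def Q_sum_entries ..
  also have "\<dots> = (\<Sum>i\<in>Sset d k j. if i = j then 1 else 0)"
  proof (intro sum.cong refl)
    fix i assume i: "i \<in> Sset d k j"
    then have id: "i < d" unfolding Sset_def using assms by (auto split: if_splits)
    have "Q d (mat d d (\<lambda>(a,b). u d i a * cnj (u d i b))) (u d j) =
        (\<Sum>a<d. u d i a * cnj (u d j a)) * cnj (\<Sum>b<d. u d i b * cnj (u d j b))"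
      unfolding Q_def by (simp add: sum_distrib_left sum_distrib_right mult_ac) (rule sum.swap)
    also have "\<dots> = (if i = j then 1 else 0)" using u_orth[OF id jd] by simp
    finally show "Q d (mat d d (\<lambda>(a,b). u d i a * cnj (u d i b))) (u d j) = (if i = j then 1 else 0)" .
  qed
  also have "\<dots> = 1" using assms unfolding Sset_def by auto
  finally show ?thesis .
qed

lemma P_suc_one:
  assumes "1 \<le> k" "k \<le> d"
  shows "P_suc d k (\<lambda>_. 1 / real k) (\<lambda>j. ket_bra (phi d j)) = 1"
proof -
  have eq: "(\<Sum>j<k. 1 / real k * Re (mtrace (E j * ket_bra (phi d j)))) = (\<Sum>j<k. 1 / real k * Re (mtrace (E j * R d j)))" for E
    using assms by (intro sum.cong refl) (simp add: ket_bra_R)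
  show ?thesis unfolding P_suc_def eq
  proof (rule cSup_eq_maximum)
    have "(\<Sum>j<k. 1 / real k * Re (mtrace (Eopt d k j * R d j))) = 1"
      using assms Eopt_value by simp
    then show "1 \<in> {\<Sum>j<k. 1 / real k * Re (mtrace (E j * R d j)) |E. is_POVM d k E}"
      using Eopt_POVM[OF assms] by force
  next
    fix x assume "x \<in> {\<Sum>j<k. 1 / real k * Re (mtrace (E j * R d j)) |E. is_POVM d k E}"
    then obtain E where E: "is_POVM d k E" and x: "x = (\<Sum>j<k. 1 / real k * Re (mtrace (E j * R d j)))" by blast
    have "x \<le> (\<Sum>j<k. 1 / real k * 1)" unfolding x
      using POVM_bound[OF E _ assms(2)] by (intro sum_mono mult_left_mono) auto
    then show "x \<le> 1" using assms by simp
  qed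
qed



lemma sum_list_map_concat: "sum_list (map g (concat xss)) = sum_list (map (\<lambda>xs. sum_list (map g xs)) xss)"
  by (induction xss) auto
lemma sum_list_upt: "sum_list (map h [0..<n]) = (\<Sum>i<n. h i)"
  by (simp add: sum_set_upt_conv_sum_list_nat[symmetric] atLeast0LessThan)

locale cons =
  fixes d k :: nat
  assumes k1: "1 \<le> k" and kd: "k \<le> d"
begin

lemma d0: "d > 0" using k1 kd by simp

definition lam :: real where "lam = (real d - real k) / (real k * (real d - 1))"
definition cc :: real where "cc = 1 / (real k * (real d - 1))"
definition alpha :: "nat \<Rightarrow> real" where "alpha f = (1 - lam) / real d + (if f = 0 then lam else 0)"
definition w :: "nat \<Rightarrow> nat \<Rightarrow> nat \<Rightarrow> real" where
  "w i j f = (if i < k then (if j = i then alpha f else 0) else (if f = 0 then 0 else cc))"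
definition KK :: "nat \<Rightarrow> nat \<Rightarrow> nat \<Rightarrow> complex mat" where
  "KK i j f = mat (k*d) d (\<lambda>(x,a). complex_of_real (sqrt (w i j f)) * (if x div d = j then u d f (x mod d) else 0) * cnj (u d i a))"
definition Kl :: "complex mat list" where
  "Kl = concat (map (\<lambda>i. concat (map (\<lambda>j. map (\<lambda>f. KK i j f) [0..<d]) [0..<k])) [0..<d])"

lemma sum_Kl: "sum_list (map g Kl) = (\<Sum>i<d. \<Sum>j<k. \<Sum>f<d. g (KK i j f))"
  unfolding Kl_def by (simp add: sum_list_map_concat comp_def sum_list_upt)

lemma set_Kl: "K \<in> set Kl \<Longrightarrow> K \<in> carrier_mat (k*d) d"
  unfolding Kl_def KK_def by auto

lemma lam_nonneg: "lam \<ge> 0"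
  unfolding lam_def using kd k1 by (intro divide_nonneg_nonneg mult_nonneg_nonneg) auto

lemma lam_le1: "lam \<le> 1"
proof (cases "d = 1")
  case True then show ?thesis unfolding lam_def by simp
next
  case False
  then have d2: "real d - 1 > 0" using d0 by simp
  have "real d - real k \<le> real k * (real d - 1)"
  proof -
    have "real d \<le> real k * real d" using mult_right_mono[of 1 "real k" "real d"] k1 by simp
    then show ?thesis by (simp add: algebra_simps)
  qed
  then show ?thesis unfolding lam_def using d2 k1 by (simp add: divide_le_eq_1)
qed

lemma lam_cc: "lam = (real d - real k) * cc"
  unfolding lam_def cc_def by simp

lemma alpha_nonneg: "alpha f \<ge> 0"
  unfolding alpha_def using lam_le1 lam_nonneg d0 by auto

lemma cc_nonneg: "cc \<ge> 0"
  unfolding cc_def using kd k1 by (cases "d = 0") auto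

lemma w_nonneg: "w i j f \<ge> 0"
  unfolding w_def using alpha_nonneg cc_nonneg by auto

lemma sum_alpha: "(\<Sum>f<d. alpha f) = 1"
proof -
  have "(\<Sum>f<d. alpha f) = (\<Sum>f<d. (1 - lam) / real d) + (\<Sum>f<d. if f = 0 then lam else 0)"
    unfolding alpha_def by (rule sum.distrib)
  also have "\<dots> = 1" using d0 by simp
  finally show ?thesis .
qed

lemma W_i: "i < d \<Longrightarrow> (\<Sum>j<k. \<Sum>f<d. w i j f) = 1"
proof (cases "i < k")
  case True
  have "(\<Sum>j<k. \<Sum>f<d. w i j f) = (\<Sum>j<k. if j = i then (\<Sum>f<d. alpha f) else 0)"
    unfolding w_def using True by (intro sum.cong refl) auto
  also have "\<dots> = 1" using True sum_alpha by simp
  finally show ?thesis .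
next
  case False
  assume i: "i < d"
  then have d2: "real d - 1 > 0" using False k1 by simp
  have "(\<Sum>f<d. (if f = 0 then 0 else cc)) = (\<Sum>f<d. cc) - (\<Sum>f<d. if f = 0 then cc else 0)"
    by (subst sum_subtractf[symmetric]) (intro sum.cong refl, auto)
  also have "\<dots> = (real d - 1) * cc" using d0 by (simp add: algebra_simps)
  finally have "(\<Sum>f<d. (if f = 0 then 0 else cc)) = (real d - 1) * cc" .
  then have "(\<Sum>j<k. \<Sum>f<d. w i j f) = real k * ((real d - 1) * cc)"
    unfolding w_def using False by simp
  also have "\<dots> = 1" unfolding cc_def using d2 k1 by simp
  finally show ?thesis .
qed

lemma alpha_plus: "(1 - lam) / real d + lam = 1 / real k"
proof (cases "d = 1")
  case True
  then have "k = 1" using k1 kd by simp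
  then show ?thesis using True unfolding lam_def by simp
next
  case False
  then have d2: "real d - 1 \<noteq> 0" using d0 by simp
  have k0: "real k \<noteq> 0" using k1 by simp
  have dd: "real d \<noteq> 0" using d0 by simp
  have l: "lam * (real d - 1) = (real d - real k) / real k" unfolding lam_def using d2 by simp
  have "(1 - lam) / real d + lam = (1 + lam * (real d - 1)) / real d" using dd by (simp add: field_simps)
  also have "\<dots> = (1 + (real d - real k) / real k) / real d" unfolding l ..
  also have "1 + (real d - real k) / real k = real d / real k" using k0 by (simp add: field_simps)
  finally show ?thesis using dd by simp
qed

lemma W_j: "j < k \<Longrightarrow> (\<Sum>i<d. w i j f) = 1 / real k"
proof -
  assume j: "j < k"
  have "(\<Sum>i<d. w i j f) = (\<Sum>i<k. w i j f) + (\<Sum>i\<in>{k..<d}. w i j f)"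
    using kd by (simp add: lessThan_atLeast0 sum.atLeastLessThan_concat)
  also have "(\<Sum>i<k. w i j f) = (\<Sum>i<k. if i = j then alpha f else 0)"
    unfolding w_def by (intro sum.cong refl) auto
  also have "\<dots> = alpha f" using j by simp
  also have "(\<Sum>i\<in>{k..<d}. w i j f) = (\<Sum>i\<in>{k..<d}. if f = 0 then 0 else cc)"
    unfolding w_def by (intro sum.cong refl) auto
  also have "\<dots> = (real d - real k) * (if f = 0 then 0 else cc)" using kd by (simp add: of_nat_diff)
  also have "alpha f + (real d - real k) * (if f = 0 then 0 else cc) = (1 - lam) / real d + lam"
    unfolding alpha_def lam_cc by auto
  finally show ?thesis using alpha_plus by simp
qed

lemma sqrt_w: "complex_of_real (sqrt (w i j f)) * cnj (complex_of_real (sqrt (w i j f))) = complex_of_real (w i j f)"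
proof -
  have "sqrt (w i j f) * sqrt (w i j f) = w i j f" using w_nonneg by simp
  then show ?thesis by (metis complex_cnj_complex_of_real of_real_mult)
qed

end



context cons
begin

lemma KK_entry: "x < k*d \<Longrightarrow> a < d \<Longrightarrow> KK i j f $$ (x,a) =
   complex_of_real (sqrt (w i j f)) * (if x div d = j then u d f (x mod d) else 0) * cnj (u d i a)"
  unfolding KK_def by simp

lemma KK_TP:
  assumes a: "a < d" and b: "b < d" and j: "j < k" and f: "f < d"
  shows "(\<Sum>x<k*d. cnj (KK i j f $$ (x,a)) * KK i j f $$ (x,b)) = complex_of_real (w i j f) * (u d i a * cnj (u d i b))"
proof -
  have "(\<Sum>x<k*d. cnj (KK i j f $$ (x,a)) * KK i j f $$ (x,b)) =
    (\<Sum>x<k*d. if x div d = j then complex_of_real (w i j f) * (u d i a * cnj (u d i b)) * (u d f (x mod d) * cnj (u d f (x mod d))) else 0)"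
  proof (intro sum.cong refl)
    fix x assume "x \<in> {..<k*d}"
    then have x: "x < k*d" by simp
    show "cnj (KK i j f $$ (x,a)) * KK i j f $$ (x,b) =
      (if x div d = j then complex_of_real (w i j f) * (u d i a * cnj (u d i b)) * (u d f (x mod d) * cnj (u d f (x mod d))) else 0)"
      unfolding KK_entry[OF x a] KK_entry[OF x b] using sqrt_w[of i j f]
      by (simp add: mult_ac)
  qed
  also have "\<dots> = (\<Sum>a'<d. complex_of_real (w i j f) * (u d i a * cnj (u d i b)) * (u d f a' * cnj (u d f a')))"
    using j by (simp add: block_sum)
  also have "\<dots> = complex_of_real (w i j f) * (u d i a * cnj (u d i b)) * (\<Sum>a'<d. u d f a' * cnj (u d f a'))"
    by (simp add: sum_distrib_left)
  also have "\<dots> = complex_of_real (w i j f) * (u d i a * cnj (u d i b))"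
    using u_orth[OF f f] by simp
  finally show ?thesis .
qed

lemma Kl_channel: "is_channel d (k*d) Kl"
proof -
  have K: "\<forall>K\<in>set Kl. K \<in> carrier_mat (k*d) d" using set_Kl by blast
  have "foldr (\<lambda>K acc. mat_adjoint K * K + acc) Kl (0\<^sub>m d d) = 1\<^sub>m d"
  proof (rule eq_matI)
    have c: "foldr (\<lambda>K acc. mat_adjoint K * K + acc) Kl (0\<^sub>m d d) \<in> carrier_mat d d"
      using channel_TP_entry[OF K] by blast
    then show "dim_row (foldr (\<lambda>K acc. mat_adjoint K * K + acc) Kl (0\<^sub>m d d)) = dim_row (1\<^sub>m d)"
      "dim_col (foldr (\<lambda>K acc. mat_adjoint K * K + acc) Kl (0\<^sub>m d d)) = dim_col (1\<^sub>m d)" by auto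
    fix a b assume "a < dim_row (1\<^sub>m d)" "b < dim_col (1\<^sub>m d)"
    then have ab: "a < d" "b < d" by auto
    have "foldr (\<lambda>K acc. mat_adjoint K * K + acc) Kl (0\<^sub>m d d) $$ (a,b) =
      sum_list (map (\<lambda>K. \<Sum>x<k*d. cnj (K $$ (x,a)) * K $$ (x,b)) Kl)"
      using channel_TP_entry[OF K] ab by blast
    also have "\<dots> = (\<Sum>i<d. \<Sum>j<k. \<Sum>f<d. complex_of_real (w i j f) * (u d i a * cnj (u d i b)))"
      unfolding sum_Kl using ab by (intro sum.cong refl) (simp add: KK_TP)
    also have "\<dots> = (\<Sum>i<d. complex_of_real (\<Sum>j<k. \<Sum>f<d. w i j f) * (u d i a * cnj (u d i b)))"
      by (simp add: sum_distrib_right)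
    also have "\<dots> = (\<Sum>i<d. u d i a * cnj (u d i b))"
      using W_i by (intro sum.cong refl) simp
    also have "\<dots> = 1\<^sub>m d $$ (a,b)" using ab by (simp add: u_compl)
    finally show "foldr (\<lambda>K acc. mat_adjoint K * K + acc) Kl (0\<^sub>m d d) $$ (a,b) = 1\<^sub>m d $$ (a,b)" .
  qed
  then show ?thesis unfolding is_channel_def using K by simp
qed

lemma KK_G:
  assumes x: "x < k*d" and y: "y < k*d"
  shows "(\<Sum>a<d. \<Sum>b<d. KK i j f $$ (x,a) * F a b * cnj (KK i j f $$ (y,b))) =
    complex_of_real (w i j f) * ((if x div d = j then u d f (x mod d) else 0) * cnj (if y div d = j then u d f (y mod d) else 0))
      * (\<Sum>a<d. \<Sum>b<d. cnj (u d i a) * F a b * u d i b)"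
proof -
  have "(\<Sum>a<d. \<Sum>b<d. KK i j f $$ (x,a) * F a b * cnj (KK i j f $$ (y,b))) =
    (\<Sum>a<d. \<Sum>b<d. (complex_of_real (sqrt (w i j f)) * cnj (complex_of_real (sqrt (w i j f)))) *
       ((if x div d = j then u d f (x mod d) else 0) * cnj (if y div d = j then u d f (y mod d) else 0)) *
       (cnj (u d i a) * F a b * u d i b))"
    using x y by (intro sum.cong refl) (simp add: KK_entry mult_ac)
  also have "\<dots> = complex_of_real (w i j f) * ((if x div d = j then u d f (x mod d) else 0) * cnj (if y div d = j then u d f (y mod d) else 0))
      * (\<Sum>a<d. \<Sum>b<d. cnj (u d i a) * F a b * u d i b)"
    unfolding sqrt_w by (simp add: sum_distrib_left)
  finally show ?thesis .
qed

lemma out_formula: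
  assumes r: "\<rho> \<in> carrier_mat d d" and x: "x < k*d" and y: "y < k*d"
  shows "apply_channel (k*d) Kl \<rho> $$ (x,y) = (if x div d = y div d then
     (\<Sum>i<d. \<Sum>f<d. complex_of_real (w i (x div d) f) * (u d f (x mod d) * cnj (u d f (y mod d))) * Q d \<rho> (u d i)) else 0)"
proof -
  have K: "\<forall>K\<in>set Kl. K \<in> carrier_mat (k*d) d" using set_Kl by blast
  have xk: "x div d < k" using block_decomp[OF x] by simp
  have "apply_channel (k*d) Kl \<rho> $$ (x,y) = (\<Sum>i<d. \<Sum>j<k. \<Sum>f<d.
     complex_of_real (w i j f) * ((if x div d = j then u d f (x mod d) else 0) * cnj (if y div d = j then u d f (y mod d) else 0))
      * Q d \<rho> (u d i))"
    unfolding ch_entry[OF K r x y] G_def sum_Kl KK_G[OF x y] Q_def ..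
  also have "\<dots> = (\<Sum>i<d. \<Sum>f<d. \<Sum>j<k.
     complex_of_real (w i j f) * ((if x div d = j then u d f (x mod d) else 0) * cnj (if y div d = j then u d f (y mod d) else 0))
      * Q d \<rho> (u d i))"
    by (intro sum.cong refl sum.swap)
  also have "\<dots> = (\<Sum>i<d. \<Sum>f<d. if x div d = y div d then complex_of_real (w i (x div d) f) * (u d f (x mod d) * cnj (u d f (y mod d))) * Q d \<rho> (u d i) else 0)"
  proof (intro sum.cong refl)
    fix i f
    have "(\<Sum>j<k. complex_of_real (w i j f) * ((if x div d = j then u d f (x mod d) else 0) * cnj (if y div d = j then u d f (y mod d) else 0))
      * Q d \<rho> (u d i)) = (\<Sum>j<k. if j = x div d then (if x div d = y div d then complex_of_real (w i (x div d) f) * (u d f (x mod d) * cnj (u d f (y mod d))) * Q d \<rho> (u d i) else 0) else 0)"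
      by (intro sum.cong refl) auto
    also have "\<dots> = (if x div d = y div d then complex_of_real (w i (x div d) f) * (u d f (x mod d) * cnj (u d f (y mod d))) * Q d \<rho> (u d i) else 0)"
      using xk by simp
    finally show "(\<Sum>j<k. complex_of_real (w i j f) * ((if x div d = j then u d f (x mod d) else 0) * cnj (if y div d = j then u d f (y mod d) else 0))
      * Q d \<rho> (u d i)) = (if x div d = y div d then complex_of_real (w i (x div d) f) * (u d f (x mod d) * cnj (u d f (y mod d))) * Q d \<rho> (u d i) else 0)" .
  qed
  also have "\<dots> = (if x div d = y div d then
     (\<Sum>i<d. \<Sum>f<d. complex_of_real (w i (x div d) f) * (u d f (x mod d) * cnj (u d f (y mod d))) * Q d \<rho> (u d i)) else 0)"
    by auto
  finally show ?thesis .
qed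

end



lemma blk_g: fixes j k d a :: nat shows "j < k \<Longrightarrow> a < d \<Longrightarrow> j*d + a < k*d"
proof -
  assume "j < k" "a < d"
  then have "j*d + a < j*d + d" by simp
  also have "\<dots> = (j+1)*d" by simp
  also have "\<dots> \<le> k*d" using \<open>j < k\<close> by (intro mult_right_mono) auto
  finally show ?thesis .
qed

context cons
begin

lemma Q_R: "i < d \<Longrightarrow> i0 < d \<Longrightarrow> Q d (R d i0) (u d i) = (if i = i0 then 1 else 0)"
proof -
  assume i: "i < d" and i0: "i0 < d"
  have "Q d (R d i0) (u d i) = (\<Sum>a<d. cnj (u d i a) * u d i0 a) * (\<Sum>b<d. cnj (u d i0 b) * u d i b)"
    unfolding Q_def R_def by (simp add: sum_distrib_left sum_distrib_right mult_ac)
  also have "(\<Sum>a<d. cnj (u d i a) * u d i0 a) = (if i0 = i then 1 else 0)"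
    using u_orth[OF i0 i] by (simp add: mult.commute)
  also have "(\<Sum>b<d. cnj (u d i0 b) * u d i b) = (if i = i0 then 1 else 0)"
    using u_orth[OF i i0] by (simp add: mult.commute)
  finally show ?thesis by auto
qed

lemma u0_prod: "u d 0 a1 * cnj (u d 0 a2) = 1 / of_nat d"
  using u_norm[OF d0, of 0 a1] unfolding u0[OF d0] by simp

lemma out_R:
  assumes i0: "i0 < k" and a1: "a1 < d" and a2: "a2 < d"
  shows "apply_channel (k*d) Kl (R d i0) $$ (i0*d+a1, i0*d+a2) =
    complex_of_real ((1 - lam) / real d) * (if a1 = a2 then 1 else 0) + complex_of_real (lam / real d)"
proof -
  have i0d: "i0 < d" using i0 kd by simp
  have x: "i0*d+a1 < k*d" and y: "i0*d+a2 < k*d" using blk_g[OF i0 a1] blk_g[OF i0 a2] by auto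
  have "apply_channel (k*d) Kl (R d i0) $$ (i0*d+a1, i0*d+a2) =
     (\<Sum>i<d. \<Sum>f<d. complex_of_real (w i i0 f) * (u d f a1 * cnj (u d f a2)) * (if i = i0 then 1 else 0))"
    unfolding out_formula[OF R_carrier x y] using a1 a2 Q_R[OF _ i0d] by (simp add: div_block mod_block)
  also have "\<dots> = (\<Sum>i<d. (\<Sum>f<d. complex_of_real (w i i0 f) * (u d f a1 * cnj (u d f a2))) * (if i = i0 then 1 else 0))"
    by (simp add: sum_distrib_right)
  also have "\<dots> = (\<Sum>f<d. complex_of_real (w i0 i0 f) * (u d f a1 * cnj (u d f a2)))"
    using i0d by (subst sum_delta_mult') simp_all
  also have "\<dots> = (\<Sum>f<d. complex_of_real (alpha f) * (u d f a1 * cnj (u d f a2)))"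
    using i0 by (simp add: w_def)
  also have "\<dots> = (\<Sum>f<d. complex_of_real ((1 - lam) / real d) * (u d f a1 * cnj (u d f a2)) +
      (if f = 0 then complex_of_real lam * (u d 0 a1 * cnj (u d 0 a2)) else 0))"
  proof (rule sum.cong[OF refl])
    fix f
    show "complex_of_real (alpha f) * (u d f a1 * cnj (u d f a2)) = complex_of_real ((1 - lam) / real d) * (u d f a1 * cnj (u d f a2)) +
      (if f = 0 then complex_of_real lam * (u d 0 a1 * cnj (u d 0 a2)) else 0)"
      unfolding alpha_def by (auto simp: distrib_right)
  qed
  also have "\<dots> = (\<Sum>f<d. complex_of_real ((1 - lam) / real d) * (u d f a1 * cnj (u d f a2))) +
      (\<Sum>f<d. (if f = 0 then complex_of_real lam * (u d 0 a1 * cnj (u d 0 a2)) else 0))"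
    by (rule sum.distrib)
  also have "(\<Sum>f<d. complex_of_real ((1 - lam) / real d) * (u d f a1 * cnj (u d f a2))) =
     complex_of_real ((1 - lam) / real d) * (if a1 = a2 then 1 else 0)"
    by (simp only: sum_distrib_left[symmetric] u_compl[OF a1 a2])
  also have "(\<Sum>f<d. (if f = 0 then complex_of_real lam * (u d 0 a1 * cnj (u d 0 a2)) else 0)) = complex_of_real (lam / real d)"
    using d0 by (simp add: u0_prod)
  finally show ?thesis .
qed

lemma Q_incoh:
  assumes r: "incoherent d \<rho>"
  shows "Q d \<rho> (u d i) = 1 / of_nat d"
proof -
  have rc: "\<rho> \<in> carrier_mat d d" and dg: "diagonal_mat \<rho>" and tr: "mtrace \<rho> = 1"
    using r unfolding incoherent_def density_def psd_def by auto
  have "Q d \<rho> (u d i) = (\<Sum>a<d. \<Sum>b<d. if b = a then \<rho> $$ (a,a) * (u d i a * cnj (u d i a)) else 0)"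
    unfolding Q_def using rc dg unfolding diagonal_mat_def by (intro sum.cong refl) (auto simp: mult_ac)
  also have "\<dots> = (\<Sum>a<d. \<rho> $$ (a,a)) / of_nat d" using u_norm[OF d0] by (simp add: sum_divide_distrib)
  also have "\<dots> = 1 / of_nat d" using tr mtrace_sum[OF rc] by simp
  finally show ?thesis .
qed

lemma out_incoh:
  assumes r: "incoherent d \<rho>" and x: "x < k*d" and y: "y < k*d"
  shows "apply_channel (k*d) Kl \<rho> $$ (x,y) = (if x = y then 1 / of_nat (k*d) else 0)"
proof -
  have rc: "\<rho> \<in> carrier_mat d d" using r unfolding incoherent_def density_def psd_def by auto
  have xk: "x div d < k" using block_decomp[OF x] by simp
  have "apply_channel (k*d) Kl \<rho> $$ (x,y) = (if x div d = y div d then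
     (\<Sum>i<d. \<Sum>f<d. complex_of_real (w i (x div d) f) * (u d f (x mod d) * cnj (u d f (y mod d))) / of_nat d) else 0)"
    unfolding out_formula[OF rc x y] Q_incoh[OF r] by simp
  also have "\<dots> = (if x div d = y div d then
     (\<Sum>f<d. complex_of_real (\<Sum>i<d. w i (x div d) f) * (u d f (x mod d) * cnj (u d f (y mod d))) / of_nat d) else 0)"
  proof -
    have inner: "(\<Sum>i<d. \<Sum>f<d. complex_of_real (w i (x div d) f) * (u d f (x mod d) * cnj (u d f (y mod d))) / of_nat d) =
      (\<Sum>f<d. \<Sum>i<d. complex_of_real (w i (x div d) f) * (u d f (x mod d) * cnj (u d f (y mod d))) / of_nat d)"
      by (rule sum.swap)
    also have "\<dots> = (\<Sum>f<d. complex_of_real (\<Sum>i<d. w i (x div d) f) * (u d f (x mod d) * cnj (u d f (y mod d))) / of_nat d)"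
      by (simp add: sum_distrib_right sum_divide_distrib)
    finally have "(\<Sum>i<d. \<Sum>f<d. complex_of_real (w i (x div d) f) * (u d f (x mod d) * cnj (u d f (y mod d))) / of_nat d) =
      (\<Sum>f<d. complex_of_real (\<Sum>i<d. w i (x div d) f) * (u d f (x mod d) * cnj (u d f (y mod d))) / of_nat d)" .
    then show ?thesis by (simp only:)
  qed
  also have "\<dots> = (if x div d = y div d then
     (\<Sum>f<d. u d f (x mod d) * cnj (u d f (y mod d))) / (of_nat k * of_nat d) else 0)"
  proof -
    have Wc: "complex_of_real (\<Sum>i<d. w i (x div d) f) = 1 / of_nat k" for f using W_j[OF xk] by simp
    have "(\<Sum>f<d. complex_of_real (\<Sum>i<d. w i (x div d) f) * (u d f (x mod d) * cnj (u d f (y mod d))) / of_nat d)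
      = (\<Sum>f<d. 1 / of_nat k * (u d f (x mod d) * cnj (u d f (y mod d))) / of_nat d)" by (simp only: Wc)
    also have "\<dots> = (\<Sum>f<d. u d f (x mod d) * cnj (u d f (y mod d))) / (of_nat k * of_nat d)"
      by (simp add: sum_divide_distrib)
    finally show ?thesis by (simp only:)
  qed
  also have "\<dots> = (if x = y then 1 / of_nat (k*d) else 0)"
  proof -
    have "x mod d < d" "y mod d < d" using d0 by auto
    moreover have "x = y \<longleftrightarrow> x div d = y div d \<and> x mod d = y mod d"
      using div_mult_mod_eq[of x d] div_mult_mod_eq[of y d] by metis
    ultimately show ?thesis using u_compl by auto
  qed
  finally show ?thesis .
qed

lemma Kl_MIO: "is_MIO d (k*d) Kl"
proof -
  have "incoherent (k*d) (apply_channel (k*d) Kl \<rho>)" if r: "incoherent d \<rho>" for \<rho>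
  proof -
    have rc: "\<rho> \<in> carrier_mat d d" using r unfolding incoherent_def density_def psd_def by auto
    have K: "\<forall>K\<in>set Kl. K \<in> carrier_mat (k*d) d" using set_Kl by blast
    have eq: "apply_channel (k*d) Kl \<rho> = mat (k*d) (k*d) (\<lambda>(x,y). if x = y then 1 / of_nat (k*d) else 0)"
      by (rule eq_matI) (use ch_carrier[OF K rc] out_incoh[OF r] in auto)
    have "psd (k*d) (apply_channel (k*d) Kl \<rho>)" unfolding eq
      by (rule psd_diag_mat) (simp add: nn_def)
    moreover have "mtrace (apply_channel (k*d) Kl \<rho>) = 1"
      unfolding eq mtrace_def using d0 k1 by simp
    moreover have "diagonal_mat (apply_channel (k*d) Kl \<rho>)" unfolding eq diagonal_mat_def by simp
    ultimately show ?thesis unfolding incoherent_def density_def by simp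
  qed
  then show ?thesis unfolding is_MIO_def using Kl_channel by simp
qed

lemma Kl_succ: "(\<Sum>j<k. (1 / real k) * Re (proj_B_trace d j (apply_channel (k*d) Kl (R d j)))) = 1"
proof -
  have "proj_B_trace d j (apply_channel (k*d) Kl (R d j)) = 1" if j: "j < k" for j
  proof -
    have "proj_B_trace d j (apply_channel (k*d) Kl (R d j)) =
      (\<Sum>a<d. complex_of_real ((1 - lam) / real d) + complex_of_real (lam / real d))"
      unfolding proj_B_trace_def using out_R[OF j] by simp
    also have "\<dots> = 1" using d0 by (simp add: field_simps)
    finally show ?thesis .
  qed
  then show ?thesis using k1 by simp
qed

end



context cons
begin

lemma Kl_succ_loc: "mio_succ d k Kl"
  by (unfold_locales) (use Kl_MIO k1 kd Kl_succ in auto)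

lemma lam_d: "lam * (real d - 1) = (real d - real k) / real k"
proof (cases "d = 1")
  case True
  then have "k = 1" using k1 kd by simp
  then show ?thesis using True unfolding lam_def by simp
next
  case False
  then have "real d - 1 \<noteq> 0" using d0 by simp
  then show ?thesis unfolding lam_def by simp
qed

lemma sigma_Kl:
  assumes j: "j < k" and a1: "a1 < d" and a2: "a2 < d"
  shows "ptrace_B k d (apply_channel (k*d) Kl (R d j)) $$ (a1,a2) =
    complex_of_real ((1 - lam) / real d) * (if a1 = a2 then 1 else 0) + complex_of_real (lam / real d)"
proof -
  interpret ms: mio_succ d k Kl by (rule Kl_succ_loc)
  show ?thesis using ms.sigma_entry[OF j a1 a2] out_R[OF j a1 a2] unfolding ms.N_def by simp
qed

lemma rob_lower:
  assumes j: "j < k" and s: "s \<in> robset d (ptrace_B k d (apply_channel (k*d) Kl (R d j)))"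
  shows "s \<ge> (real d - real k) / real k"
proof -
  define S where "S = ptrace_B k d (apply_channel (k*d) Kl (R d j))"
  have Sc: "S \<in> carrier_mat d d" unfolding S_def ptrace_B_def by simp
  obtain \<tau> where s0: "s \<ge> 0" and td: "density d \<tau>" and inc: "incoherent d (complex_of_real (1/(1+s)) \<cdot>\<^sub>m (S + complex_of_real s \<cdot>\<^sub>m \<tau>))"
    using s unfolding robset_def S_def by blast
  have tc: "\<tau> \<in> carrier_mat d d" using td unfolding density_def psd_def by simp
  have ttr: "(\<Sum>a<d. \<tau> $$ (a,a)) = 1" using td mtrace_sum[OF tc] unfolding density_def by simp
  have off: "S $$ (a,b) + complex_of_real s * \<tau> $$ (a,b) = 0" if "a < d" "b < d" "a \<noteq> b" for a b
  proof -
    have "diagonal_mat (complex_of_real (1/(1+s)) \<cdot>\<^sub>m (S + complex_of_real s \<cdot>\<^sub>m \<tau>))" using inc unfolding incoherent_def by simp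
    then have "complex_of_real (1/(1+s)) * (S $$ (a,b) + complex_of_real s * \<tau> $$ (a,b)) = 0"
      using that Sc tc unfolding diagonal_mat_def by simp
    moreover have "complex_of_real (1/(1+s)) \<noteq> 0"
    proof -
      have "1/(1+s) \<noteq> 0" using s0 by simp
      then show ?thesis by (simp only: of_real_eq_0_iff not_False_eq_True)
    qed
    ultimately show ?thesis by simp
  qed
  have Sent: "S $$ (a,b) = (if a = b then complex_of_real ((1 - lam) / real d) else 0) + complex_of_real (lam / real d)"
    if "a < d" "b < d" for a b unfolding S_def using sigma_Kl[OF j that] by simp
  define q where "q = (\<Sum>a<d. \<Sum>b<d. \<tau> $$ (a,b))"
  have qnn: "Re q \<ge> 0"
  proof -
    have "nn (Q d \<tau> (\<lambda>_. 1))" using td unfolding density_def psd_iff by simp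
    moreover have "Q d \<tau> (\<lambda>_. 1) = q" unfolding Q_def q_def by simp
    ultimately show ?thesis unfolding nn_def by simp
  qed
  have SS: "(\<Sum>a<d. \<Sum>b<d. S $$ (a,b)) = complex_of_real (1 - lam + real d * lam)"
  proof -
    have "(\<Sum>a<d. \<Sum>b<d. S $$ (a,b)) = (\<Sum>a<d. \<Sum>b<d. (if b = a then complex_of_real ((1 - lam) / real d) else 0) + complex_of_real (lam / real d))"
      using Sent by (intro sum.cong refl) auto
    also have "\<dots> = (\<Sum>a<d. complex_of_real ((1 - lam) / real d) + of_nat d * complex_of_real (lam / real d))"
      by (intro sum.cong refl) (simp add: sum.distrib)
    also have "\<dots> = complex_of_real (1 - lam + real d * lam)" using d0 by (simp add: field_simps)
    finally show ?thesis .
  qed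
  have Sd: "(\<Sum>a<d. S $$ (a,a)) = 1"
  proof -
    have "(\<Sum>a<d. S $$ (a,a)) = (\<Sum>a<d. complex_of_real ((1 - lam) / real d) + complex_of_real (lam / real d))"
      using Sent by (intro sum.cong refl) auto
    also have "\<dots> = 1" using d0 by (simp add: field_simps)
    finally show ?thesis .
  qed
  have "(\<Sum>a<d. \<Sum>b<d. S $$ (a,b) + complex_of_real s * \<tau> $$ (a,b)) = (\<Sum>a<d. S $$ (a,a) + complex_of_real s * \<tau> $$ (a,a))"
  proof (intro sum.cong refl)
    fix a assume "a \<in> {..<d}"
    then have a: "a < d" by simp
    have "(\<Sum>b<d. S $$ (a,b) + complex_of_real s * \<tau> $$ (a,b)) = (\<Sum>b<d. if b = a then S $$ (a,a) + complex_of_real s * \<tau> $$ (a,a) else 0)"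
      using off a by (intro sum.cong refl) auto
    then show "(\<Sum>b<d. S $$ (a,b) + complex_of_real s * \<tau> $$ (a,b)) = S $$ (a,a) + complex_of_real s * \<tau> $$ (a,a)"
      using a by simp
  qed
  then have E: "complex_of_real (1 - lam + real d * lam) + complex_of_real s * q = 1 + complex_of_real s"
    unfolding q_def by (simp add: sum.distrib sum_distrib_left[symmetric] SS Sd ttr)
  have "1 - lam + real d * lam + s * Re q = 1 + s"
    using arg_cong[where f=Re, OF E] by simp
  then have "s = lam * (real d - 1) + s * Re q" by (simp add: algebra_simps)
  moreover have "s * Re q \<ge> 0" using s0 qnn by simp
  ultimately show ?thesis using lam_d by simp
qed

lemma rob_Kl:
  assumes j: "j < k"
  shows "robustness d (ptrace_B k d (apply_channel (k*d) Kl (R d j))) \<ge> (real d - real k) / real k"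
proof -
  interpret ms: mio_succ d k Kl by (rule Kl_succ_loc)
  have "robset d (ptrace_B k d (apply_channel (k*d) Kl (R d j))) \<noteq> {}"
    using ms.rob_mem[OF j] unfolding ms.N_def by blast
  then show ?thesis using rob_lower[OF j] by (rule robustness_ge)
qed

end



lemma prod_list_upt: "prod_list (map h [0..<n]) = (\<Prod>i<n. h i)"
  by (induction n) auto

context cons
begin

definition Dm :: "complex mat" where "Dm = mat d d (\<lambda>(i,j). if i = j \<and> i < k then 1 / of_nat k else 0)"
definition Um :: "complex mat" where "Um = mat d d (\<lambda>(a,m). u d m a)"
definition Vm :: "complex mat" where "Vm = mat d d (\<lambda>(m,b). cnj (u d m b))"

definition Am where "Am = complex_of_real (1 / real k) \<cdot>\<^sub>m matsum d (\<lambda>j. ket_bra (phi d j)) k"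

lemma Am_entry: "a < d \<Longrightarrow> b < d \<Longrightarrow> Am $$ (a,b) = (\<Sum>j<k. u d j a * cnj (u d j b)) / of_nat k"
proof -
  assume ab: "a < d" "b < d"
  have c: "\<And>j. j < k \<Longrightarrow> ket_bra (phi d j) \<in> carrier_mat d d" using ket_bra_R kd R_carrier by simp
  have me: "matsum d (\<lambda>j. ket_bra (phi d j)) k \<in> carrier_mat d d \<and> (\<forall>a<d. \<forall>b<d. matsum d (\<lambda>j. ket_bra (phi d j)) k $$ (a,b) = (\<Sum>j<k. ket_bra (phi d j) $$ (a,b)))"
    by (rule matsum_entry) (use c in auto)
  have mc: "matsum d (\<lambda>j. ket_bra (phi d j)) k \<in> carrier_mat d d" using me by simp
  have "Am $$ (a,b) = complex_of_real (1 / real k) * (\<Sum>j<k. ket_bra (phi d j) $$ (a,b))"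
    unfolding Am_def using me ab carrier_matD[OF mc] by simp
  also have "(\<Sum>j<k. ket_bra (phi d j) $$ (a,b)) = (\<Sum>j<k. u d j a * cnj (u d j b))"
    using ab kd by (intro sum.cong refl) (simp add: ket_bra_R R_def)
  finally show ?thesis by (simp add: divide_inverse mult.commute)
qed

lemma Am_carrier: "Am \<in> carrier_mat d d"
proof -
  have c: "\<And>j. j < k \<Longrightarrow> ket_bra (phi d j) \<in> carrier_mat d d" using ket_bra_R kd R_carrier by simp
  have "matsum d (\<lambda>j. ket_bra (phi d j)) k \<in> carrier_mat d d"
    using matsum_entry[of k "\<lambda>j. ket_bra (phi d j)" d] c by blast
  then show ?thesis unfolding Am_def by simp
qed

lemma UV: "Um * Vm = 1\<^sub>m d"
proof (rule eq_matI)
  fix i j assume "i < dim_row (1\<^sub>m d)" "j < dim_col (1\<^sub>m d)"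
  then have ij: "i < d" "j < d" by auto
  have "(Um * Vm) $$ (i,j) = (\<Sum>m<d. u d m i * cnj (u d m j))"
    using ij by (subst mult_entry[of _ d d]) (auto simp: Um_def Vm_def)
  also have "\<dots> = (if i = j then 1 else 0)" using u_compl[OF ij] .
  finally show "(Um * Vm) $$ (i,j) = 1\<^sub>m d $$ (i,j)" using ij by auto
qed (auto simp: Um_def Vm_def)

lemma VU: "Vm * Um = 1\<^sub>m d"
proof (rule eq_matI)
  fix i j assume "i < dim_row (1\<^sub>m d)" "j < dim_col (1\<^sub>m d)"
  then have ij: "i < d" "j < d" by auto
  have "(Vm * Um) $$ (i,j) = (\<Sum>a<d. cnj (u d i a) * u d j a)"
    using ij by (subst mult_entry[of _ d d]) (auto simp: Um_def Vm_def)
  also have "\<dots> = (if j = i then 1 else 0)" using u_orth[OF ij(2) ij(1)] by (simp add: mult.commute)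
  finally show "(Vm * Um) $$ (i,j) = 1\<^sub>m d $$ (i,j)" using ij by auto
qed (auto simp: Um_def Vm_def)

lemma UDV: "Am = Um * Dm * Vm"
proof (rule eq_matI)
  fix a b assume "a < dim_row (Um * Dm * Vm)" "b < dim_col (Um * Dm * Vm)"
  then have ab: "a < d" "b < d" by (auto simp: Um_def Vm_def)
  have UD: "(Um * Dm) $$ (a,m) = (if m < k then u d m a / of_nat k else 0)" if "m < d" for m
  proof -
    have "(Um * Dm) $$ (a,m) = (\<Sum>l<d. u d l a * (if l = m \<and> l < k then 1 / of_nat k else 0))"
      using ab that by (subst mult_entry[of _ d d]) (auto simp: Um_def Dm_def)
    also have "\<dots> = (\<Sum>l<d. (if l = m then (if m < k then u d m a / of_nat k else 0) else 0))"
      by (intro sum.cong refl) auto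
    also have "\<dots> = (if m < k then u d m a / of_nat k else 0)" using that by simp
    finally show ?thesis .
  qed
  have "(Um * Dm * Vm) $$ (a,b) = (\<Sum>m<d. (Um * Dm) $$ (a,m) * cnj (u d m b))"
    using ab by (subst mult_entry[of _ d d]) (auto simp: Um_def Vm_def Dm_def)
  also have "\<dots> = (\<Sum>m<d. if m < k then u d m a * cnj (u d m b) / of_nat k else 0)"
    using UD by (intro sum.cong refl) auto
  also have "\<dots> = (\<Sum>m<k. u d m a * cnj (u d m b) / of_nat k)"
  proof -
    have "(\<Sum>m<d. if m < k then u d m a * cnj (u d m b) / of_nat k else 0) =
      (\<Sum>m<k. if m < k then u d m a * cnj (u d m b) / of_nat k else 0) + (\<Sum>m\<in>{k..<d}. if m < k then u d m a * cnj (u d m b) / of_nat k else 0)"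
    proof -
      have eq: "{..<d} = {..<k} \<union> {k..<d}" using kd by auto
      show ?thesis by (subst eq) (rule sum.union_disjoint, auto)
    qed
    moreover have "(\<Sum>m\<in>{k..<d}. if m < k then u d m a * cnj (u d m b) / of_nat k else 0) = 0"
      by (intro sum.neutral) auto
    ultimately show ?thesis by simp
  qed
  also have "\<dots> = Am $$ (a,b)" using Am_entry[OF ab] by (simp add: sum_divide_distrib)
  finally show "Am $$ (a,b) = (Um * Dm * Vm) $$ (a,b)" by simp
qed (auto simp: Um_def Vm_def carrier_matD[OF Am_carrier])

lemma charpoly_Am: "char_poly Am = [:- (1 / of_nat k), 1:] ^ k * [:0, 1:] ^ (d - k)"
proof -
  have "similar_mat Am Dm"
  proof -
    have "Um \<in> carrier_mat d d" "Vm \<in> carrier_mat d d" "Dm \<in> carrier_mat d d" by (auto simp: Um_def Vm_def Dm_def)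
    then show ?thesis by (intro similar_matI[where n=d and P=Um and Q=Vm]) (use UV VU UDV Am_carrier in auto)
  qed
  then have "char_poly Am = char_poly Dm" by (rule char_poly_similar)
  also have "char_poly Dm = (\<Prod>a\<leftarrow>diag_mat Dm. [:- a, 1:])"
    by (rule char_poly_upper_triangular[where A=Dm and n=d]) (auto simp: Dm_def upper_triangular_def)
  also have "\<dots> = (\<Prod>i<d. [:- (if i < k then 1 / of_nat k else 0), 1:])"
  proof -
    have dr: "dim_row Dm = d" by (simp add: Dm_def)
    show ?thesis unfolding diag_mat_def dr map_map comp_def prod_list_upt by (intro prod.cong refl) (simp add: Dm_def)
  qed
  also have "\<dots> = (\<Prod>i<k. [:- (1 / of_nat k), 1:]) * (\<Prod>i\<in>{k..<d}. [:0, 1:])"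
    using kd by (simp add: lessThan_atLeast0 prod.atLeastLessThan_concat[symmetric, of 0 k d] )
  also have "\<dots> = [:- (1 / of_nat k), 1:] ^ k * [:0, 1:] ^ (d - k)" by simp
  finally show ?thesis .
qed

end



context cons
begin

lemma vn_Am: "vn_entropy Am = log 2 (real k)"
proof -
  define p where "p = [:- (1 / of_nat k), 1:] ^ k * [:0, 1::complex:] ^ (d - k)"
  have cp: "char_poly Am = p" unfolding p_def by (rule charpoly_Am)
  have p0: "p \<noteq> 0" unfolding p_def by simp
  have roots: "{z. poly p z = 0} \<subseteq> {1 / of_nat k, 0}"
    unfolding p_def by (auto simp: poly_power)
  have r1: "1 / of_nat k \<in> {z. poly p z = 0}"
    unfolding p_def using k1 by (simp add: poly_power)
  have ord: "order (1 / of_nat k) p = k"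
  proof -
    have "order (1 / of_nat k) p = order (1 / of_nat k :: complex) ([:- (1 / of_nat k), 1:] ^ k) + order (1 / of_nat k) ([:0, 1::complex:] ^ (d - k))"
      unfolding p_def by (rule order_mult) (use p0 p_def in simp)
    also have "\<dots> = k" using k1 by (simp add: order_power_n_n order_linear_power)
    finally show ?thesis .
  qed
  define g where "g z = real (order z p) * (Re z * log 2 (Re z))" for z
  have "(\<Sum>z\<in>{z. poly p z = 0}. g z) = (\<Sum>z\<in>{1 / of_nat k}. g z)"
  proof (rule sum.mono_neutral_right)
    show "finite {z. poly p z = 0}" using roots by (rule finite_subset) simp
    show "{1 / of_nat k} \<subseteq> {z. poly p z = 0}" using r1 by simp
    show "\<forall>i\<in>{z. poly p z = 0} - {1 / of_nat k}. g i = 0" using roots unfolding g_def by auto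
  qed
  also have "\<dots> = real k * (1 / real k * log 2 (1 / real k))" unfolding g_def using ord by simp
  also have "\<dots> = - log 2 (real k)" using k1 by (simp add: log_divide)
  finally show ?thesis unfolding vn_entropy_def cp g_def by simp
qed

lemma C_MIO_val: "C_MIO d k (\<lambda>_. 1 / real k) (\<lambda>j. ket_bra (phi d j)) = log 2 (1 + (real d - real k) / real k)"
proof -
  have e1: "(\<Sum>j<k. 1 / real k * robustness d (ptrace_B k d (apply_channel (k*d) Ks (ket_bra (phi d j))))) =
            (\<Sum>j<k. 1 / real k * robustness d (ptrace_B k d (apply_channel (k*d) Ks (R d j))))" for Ks
    using kd by (intro sum.cong refl) (simp add: ket_bra_R)
  have e2: "(\<Sum>j<k. 1 / real k * Re (proj_B_trace d j (apply_channel (k*d) Ks (ket_bra (phi d j))))) =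
            (\<Sum>j<k. 1 / real k * Re (proj_B_trace d j (apply_channel (k*d) Ks (R d j))))" for Ks
    using kd by (intro sum.cong refl) (simp add: ket_bra_R)
  define T where "T = {(\<Sum>j<k. 1 / real k * robustness d (ptrace_B k d (apply_channel (k*d) Ks (R d j)))) | Ks.
      is_MIO d (k*d) Ks \<and> (\<Sum>j<k. 1 / real k * Re (proj_B_trace d j (apply_channel (k*d) Ks (R d j)))) = 1}"
  have CT: "C_MIO d k (\<lambda>_. 1 / real k) (\<lambda>j. ket_bra (phi d j)) = log 2 (1 + Sup T)"
    unfolding C_MIO_def T_def e1 e2 P_suc_one[OF k1 kd] ..
  have up: "x \<le> (real d - real k) / real k" if "x \<in> T" for x
  proof -
    obtain Ks where Ks: "is_MIO d (k*d) Ks" and sc: "(\<Sum>j<k. 1 / real k * Re (proj_B_trace d j (apply_channel (k*d) Ks (R d j)))) = 1"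
      and x: "x = (\<Sum>j<k. 1 / real k * robustness d (ptrace_B k d (apply_channel (k*d) Ks (R d j))))"
      using \<open>x \<in> T\<close> unfolding T_def by blast
    interpret ms: mio_succ d k Ks by unfold_locales (use Ks sc k1 kd in auto)
    show ?thesis using ms.rob_upper unfolding x ms.N_def by simp
  qed
  have mem: "(real d - real k) / real k \<in> T"
  proof -
    define v where "v = (\<Sum>j<k. 1 / real k * robustness d (ptrace_B k d (apply_channel (k*d) Kl (R d j))))"
    have vT: "v \<in> T" unfolding T_def v_def using Kl_MIO Kl_succ by auto
    have "v \<ge> (\<Sum>j<k. 1 / real k * ((real d - real k) / real k))"
      unfolding v_def using rob_Kl k1 by (intro sum_mono mult_left_mono) auto
    moreover have "(\<Sum>j<k. 1 / real k * ((real d - real k) / real k)) = (real d - real k) / real k"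
      using k1 by simp
    ultimately have "v = (real d - real k) / real k" using up[OF vT] by simp
    then show ?thesis using vT by simp
  qed
  have "Sup T = (real d - real k) / real k" by (rule cSup_eq_maximum[OF mem up])
  then show ?thesis unfolding CT by simp
qed

end

theorem proposition3:
  fixes d k :: nat
  assumes "1 \<le> k" and "k \<le> d"
  shows "C_MIO d k (\<lambda>_. 1 / real k) (\<lambda>j. ket_bra (phi d j))
         + vn_entropy (complex_of_real (1 / real k) \<cdot>\<^sub>m matsum d (\<lambda>j. ket_bra (phi d j)) k)
         = log 2 (real d)"
proof -
  interpret cons d k by unfold_locales (use assms in auto)
  have "C_MIO d k (\<lambda>_. 1 / real k) (\<lambda>j. ket_bra (phi d j)) = log 2 (real d) - log 2 (real k)"
  proof -
    have "1 + (real d - real k) / real k = real d / real k" using assms by (simp add: field_simps)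
    then show ?thesis unfolding C_MIO_val using assms by (simp add: log_divide)
  qed
  moreover have "vn_entropy (complex_of_real (1 / real k) \<cdot>\<^sub>m matsum d (\<lambda>j. ket_bra (phi d j)) k) = log 2 (real k)"
    using vn_Am unfolding Am_def .
  ultimately show ?thesis by simp
qed

end
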